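(* Let $d$ be a non-negative integer, $Z$ a finite abelian group, $\mu$ the Haar probability measure on $\mathbb{T}^d\times Z$, and $\alpha$ a real number. Let $A,B$ be closed subsets of $\mathbb{T}^d\times Z$ satisfying $0<\mu(A+B)\leq\alpha\,\mu(A)$. For each positive integer $n$ let $A_n=A+\big([-\tfrac1n,\tfrac1n]^d\times\{0_Z\}\big)$. Then for every $\epsilon>0$, for every sufficiently large $n\in\mathbb{N}$ there exists a non-empty closed subset $A_n'\subset A_n$ such that for every $m\in\mathbb{N}$ we have $\mu(A_n'+mB)\leq (1+\epsilon)^m\alpha^m\mu(A_n')$.
   Context: $\mathbb{T}=\mathbb{R}/\mathbb{Z}$, identified as a set with $[0,1)$ (so $[-\tfrac1n,\tfrac1n]$ denotes its image in $\mathbb{T}$). $mB=\{b_1+\dots+b_m:b_i\in B\}$. *)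

theory Defs
  imports "HOL-Analysis.Analysis" "HOL-Probability.Probability"
begin

text \<open>The torus T^d, with T = R/Z identified with [0,1). Points of T^d are
  represented as extensional functions on the index set {..<d} with values in [0,1)
  (this allows d = 0, where T^0 is a single point).\<close>

definition torus :: "nat \<Rightarrow> (nat \<Rightarrow> real) set" where
  "torus d = PiE {..<d} (\<lambda>_. {0..<1})"

definition tproj :: "nat \<Rightarrow> (nat \<Rightarrow> real) \<Rightarrow> (nat \<Rightarrow> real)" where
  "tproj d v = (\<lambda>i\<in>{..<d}. frac (v i))"

definition gadd :: "nat \<Rightarrow> (nat \<Rightarrow> real) \<times> 'z::ab_group_add \<Rightarrow> (nat \<Rightarrow> real) \<times> 'z \<Rightarrow> (nat \<Rightarrow> real) \<times> 'z" where
  "gadd d p q = (tproj d (\<lambda>i. fst p i + fst q i), snd p + snd q)"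

definition gzero :: "nat \<Rightarrow> (nat \<Rightarrow> real) \<times> 'z::ab_group_add" where
  "gzero d = (tproj d (\<lambda>_. 0), 0)"

definition sumset :: "nat \<Rightarrow> ((nat \<Rightarrow> real) \<times> 'z::ab_group_add) set \<Rightarrow> ((nat \<Rightarrow> real) \<times> 'z) set \<Rightarrow> ((nat \<Rightarrow> real) \<times> 'z) set" where
  "sumset d A B = {gadd d a b | a b. a \<in> A \<and> b \<in> B}"

fun msumset :: "nat \<Rightarrow> nat \<Rightarrow> ((nat \<Rightarrow> real) \<times> 'z::ab_group_add) set \<Rightarrow> ((nat \<Rightarrow> real) \<times> 'z) set" where
  "msumset d 0 B = {gzero d}"
| "msumset d (Suc m) B = sumset d (msumset d m B) B"

definition haar :: "nat \<Rightarrow> ((nat \<Rightarrow> real) \<times> 'z::{ab_group_add,finite}) measure" where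
  "haar d = (PiM {..<d} (\<lambda>_. restrict_space lborel {0..<1::real}))
              \<Otimes>\<^sub>M uniform_count_measure (UNIV :: 'z set)"

text \<open>Closed subsets of T^d \<times> Z (quotient topology on T^d, discrete topology on Z):
  S is closed iff for every z, the preimage in R^d of the fibre over z is closed.
  R^d is realised as the closed subspace {v. \<forall>i\<ge>d. v i = 0} of nat \<Rightarrow> real
  (product topology), on which the topology is the Euclidean one.\<close>
definition tclosed :: "nat \<Rightarrow> ((nat \<Rightarrow> real) \<times> 'z::ab_group_add) set \<Rightarrow> bool" where
  "tclosed d S \<longleftrightarrow> S \<subseteq> torus d \<times> UNIV \<and>
     (\<forall>z. closed {v :: nat \<Rightarrow> real. (\<forall>i\<ge>d. v i = 0) \<and> (tproj d v, z) \<in> S})"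

definition cube :: "nat \<Rightarrow> nat \<Rightarrow> ((nat \<Rightarrow> real) \<times> 'z::ab_group_add) set" where
  "cube d n = {(tproj d v, 0) | v. \<forall>i<d. \<bar>v i\<bar> \<le> 1 / real n}"

end

theory Submission
  imports Defs
begin


lemma frac_frac_add: "frac (frac x + y) = frac (x + y)"
proof -
  have "frac x + y = (x + y) + of_int (- \<lfloor>x\<rfloor>)" by (simp add: frac_def)
  then show ?thesis by (simp only: frac_add_of_int_right)
qed

lemma frac_add_frac: "frac (x + frac y) = frac (x + y)"
  using frac_frac_add[of y x] by (simp add: add.commute)

lemma frac_id: "0 \<le> x \<Longrightarrow> x < 1 \<Longrightarrow> frac x = x"
  by (simp add: frac_eq)

lemma frac_eq_imp_int: "frac x = frac y \<Longrightarrow> x - y \<in> \<int>"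
proof -
  assume "frac x = frac y"
  then have "x - y = of_int (\<lfloor>x\<rfloor> - \<lfloor>y\<rfloor>)" by (simp add: frac_def)
  then show ?thesis by simp
qed

lemma tproj_in_torus: "tproj d v \<in> torus d"
  unfolding torus_def tproj_def PiE_iff by (simp add: frac_lt_1)

lemma tproj_apply: "i < d \<Longrightarrow> tproj d v i = frac (v i)"
  by (simp add: tproj_def)

lemma tproj_out: "\<not> i < d \<Longrightarrow> tproj d v i = undefined"
  by (simp add: tproj_def)

lemma torus_apply: "p \<in> torus d \<Longrightarrow> i < d \<Longrightarrow> 0 \<le> p i \<and> p i < 1"
  unfolding torus_def PiE_iff by simp

lemma torus_out: "p \<in> torus d \<Longrightarrow> \<not> i < d \<Longrightarrow> p i = undefined"
  unfolding torus_def PiE_iff extensional_def by simp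

lemma tproj_eqI: "(\<And>i. i < d \<Longrightarrow> frac (v i) = frac (w i)) \<Longrightarrow> tproj d v = tproj d w"
  by (auto simp: tproj_def)

lemma tproj_torus:
  assumes p: "p \<in> torus d" shows "tproj d p = p"
proof (rule ext)
  fix i show "tproj d p i = p i"
  proof (cases "i < d")
    case True then show ?thesis using torus_apply[OF p True] by (simp add: tproj_apply frac_id)
  next
    case False then show ?thesis by (simp add: tproj_out torus_out[OF p])
  qed
qed

lemma eq_tproj_iff:
  assumes p: "p \<in> torus d" shows "p = tproj d v \<longleftrightarrow> (\<forall>i<d. p i = frac (v i))"
proof
  assume "p = tproj d v" then show "\<forall>i<d. p i = frac (v i)" by (simp add: tproj_apply)
next
  assume h: "\<forall>i<d. p i = frac (v i)"
  show "p = tproj d v"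
  proof (rule ext)
    fix i show "p i = tproj d v i"
    proof (cases "i < d")
      case True then show ?thesis using h by (simp add: tproj_apply)
    next
      case False then show ?thesis by (simp add: tproj_out torus_out[OF p])
    qed
  qed
qed

abbreviation TT :: "nat \<Rightarrow> ((nat \<Rightarrow> real) \<times> 'z::ab_group_add) set" where
  "TT d \<equiv> torus d \<times> UNIV"

lemma gadd_in: "gadd d p q \<in> TT d"
  by (simp add: gadd_def tproj_in_torus)

lemma gzero_in: "gzero d \<in> TT d"
  by (simp add: gzero_def tproj_in_torus)

lemma gadd_comm: "gadd d p q = gadd d q p"
  by (simp add: gadd_def add.commute add_ac)

lemma gadd_assoc: "gadd d (gadd d p q) r = gadd d p (gadd d q r)"
proof -
  have "tproj d (\<lambda>i. tproj d (\<lambda>i. fst p i + fst q i) i + fst r i) = tproj d (\<lambda>i. fst p i + tproj d (\<lambda>i. fst q i + fst r i) i)"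
    by (rule tproj_eqI) (simp add: tproj_apply frac_frac_add frac_add_frac add.assoc)
  then show ?thesis by (simp add: gadd_def add.assoc)
qed

lemma gadd_gzero: "p \<in> TT d \<Longrightarrow> gadd d p (gzero d) = p"
proof -
  assume p: "p \<in> TT d"
  have "tproj d (\<lambda>i. fst p i + fst (gzero d :: (nat \<Rightarrow> real) \<times> 'a) i) = tproj d (fst p)"
    by (rule tproj_eqI) (simp add: tproj_apply gzero_def frac_add_frac[of _ 0, simplified])
  also have "\<dots> = fst p" using p by (simp add: tproj_torus mem_Times_iff)
  finally show ?thesis by (simp add: gadd_def gzero_def prod_eq_iff)
qed

lemma gadd_cancel:
  assumes "gadd d p c = gadd d q c" "p \<in> TT d" "q \<in> TT d"
  shows "p = q"
proof -
  have s: "snd p = snd q" using assms(1) by (simp add: gadd_def)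
  have "fst p = fst q"
  proof
    fix i
    show "fst p i = fst q i"
    proof (cases "i < d")
      case True
      have "tproj d (\<lambda>i. fst p i + fst c i) i = tproj d (\<lambda>i. fst q i + fst c i) i"
        using assms(1) by (simp add: gadd_def)
      then have "frac (fst p i + fst c i) = frac (fst q i + fst c i)"
        using True by (simp add: tproj_apply)
      then have "fst p i - fst q i \<in> \<int>" using frac_eq_imp_int by fastforce
      then obtain k where k: "fst p i - fst q i = of_int k" by (auto elim: Ints_cases)
      have "0 \<le> fst p i" "fst p i < 1" "0 \<le> fst q i" "fst q i < 1"
        using assms(2,3) True by (auto dest: torus_apply)
      then have "real_of_int k < 1" "-1 < real_of_int k" using k by linarith+
      then have "k < 1" "-1 < k" by linarith+
      then have "k = 0" by simp
      then show ?thesis using k by simp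
    next
      case False
      have "fst p \<in> torus d" "fst q \<in> torus d" using assms(2,3) by (auto simp: mem_Times_iff)
      then show ?thesis using False torus_out[of "fst p" d i] torus_out[of "fst q" d i] by simp
    qed
  qed
  then show ?thesis using s by (simp add: prod_eq_iff)
qed

lemma inj_gadd_right: "inj_on (\<lambda>x. gadd d x c) (TT d)"
  by (auto intro!: inj_onI dest: gadd_cancel)

lemma sumset_iff: "x \<in> sumset d X Y \<longleftrightarrow> (\<exists>a\<in>X. \<exists>b\<in>Y. x = gadd d a b)"
  by (auto simp: sumset_def)

lemma sumset_eq_image: "sumset d X Y = (\<lambda>(a,b). gadd d a b) ` (X \<times> Y)"
  by (auto simp: sumset_def)

lemma sumsetI: "a \<in> X \<Longrightarrow> b \<in> Y \<Longrightarrow> gadd d a b \<in> sumset d X Y"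
  unfolding sumset_iff by blast

lemma sumsetE: "x \<in> sumset d X Y \<Longrightarrow> (\<And>a b. a \<in> X \<Longrightarrow> b \<in> Y \<Longrightarrow> x = gadd d a b \<Longrightarrow> P) \<Longrightarrow> P"
  unfolding sumset_iff by blast

lemma sumset_sub: "sumset d X Y \<subseteq> TT d"
  using gadd_in by (blast elim: sumsetE)

lemma finite_sumset: "finite X \<Longrightarrow> finite Y \<Longrightarrow> finite (sumset d X Y)"
  by (simp add: sumset_eq_image)

lemma sumset_comm_sub: "sumset d X Y \<subseteq> sumset d Y X"
proof
  fix x assume "x \<in> sumset d X Y"
  then obtain a b where "a \<in> X" "b \<in> Y" "x = gadd d a b" by (blast elim: sumsetE)
  then show "x \<in> sumset d Y X" using gadd_comm[of d a b] sumsetI[of b Y a X d] by simp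
qed

lemma sumset_comm: "sumset d X Y = sumset d Y X"
  by (rule equalityI; rule sumset_comm_sub)

lemma sumset_assoc: "sumset d (sumset d X Y) Z = sumset d X (sumset d Y Z)"
proof
  show "sumset d (sumset d X Y) Z \<subseteq> sumset d X (sumset d Y Z)"
  proof
    fix x assume "x \<in> sumset d (sumset d X Y) Z"
    then obtain a b c where "a \<in> X" "b \<in> Y" "c \<in> Z" "x = gadd d (gadd d a b) c" by (blast elim: sumsetE)
    then show "x \<in> sumset d X (sumset d Y Z)" by (simp add: gadd_assoc sumsetI)
  qed
  show "sumset d X (sumset d Y Z) \<subseteq> sumset d (sumset d X Y) Z"
  proof
    fix x assume "x \<in> sumset d X (sumset d Y Z)"
    then obtain a b c where "a \<in> X" "b \<in> Y" "c \<in> Z" "x = gadd d a (gadd d b c)" by (blast elim: sumsetE)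
    then show "x \<in> sumset d (sumset d X Y) Z" by (simp add: gadd_assoc[symmetric] sumsetI)
  qed
qed

lemma sumset_mono: "X \<subseteq> X' \<Longrightarrow> Y \<subseteq> Y' \<Longrightarrow> sumset d X Y \<subseteq> sumset d X' Y'"
  unfolding sumset_iff subset_iff by blast

lemma sumset_empty[simp]: "sumset d {} Y = {}" "sumset d X {} = {}"
  unfolding sumset_iff set_eq_iff by blast+

lemma sumset_Un1: "sumset d (X \<union> X') Y = sumset d X Y \<union> sumset d X' Y"
  unfolding sumset_iff set_eq_iff Un_iff by blast

lemma sumset_Un2: "sumset d X (Y \<union> Y') = sumset d X Y \<union> sumset d X Y'"
  unfolding sumset_iff set_eq_iff Un_iff by blast

lemma sumset_single: "sumset d X {c} = (\<lambda>x. gadd d x c) ` X"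
  unfolding sumset_iff set_eq_iff image_iff by blast

lemma sumset_gzero: "X \<subseteq> TT d \<Longrightarrow> sumset d X {gzero d} = X"
proof -
  assume X: "X \<subseteq> TT d"
  have "(\<lambda>x. gadd d x (gzero d)) ` X = (\<lambda>x. x) ` X"
    by (rule image_cong) (use X gadd_gzero in auto)
  then show ?thesis by (simp add: sumset_single)
qed

lemma card_sumset_single: "X \<subseteq> TT d \<Longrightarrow> card (sumset d X {c}) = card X"
  by (simp add: sumset_single card_image inj_on_subset[OF inj_gadd_right])

lemma msumset_sub: "msumset d m B \<subseteq> TT d"
  by (cases m) (simp_all add: gzero_in sumset_sub)

lemma finite_msumset: "finite B \<Longrightarrow> finite (msumset d m B)"
  by (induction m) (simp_all add: finite_sumset)

lemma sumset_Diff_single: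
  assumes "X \<subseteq> TT d" "Z \<subseteq> X"
  shows "sumset d (X - Z) {c} = sumset d X {c} - sumset d Z {c}"
  unfolding sumset_single
  by (rule inj_on_image_set_diff[OF inj_gadd_right]) (use assms in blast)+



lemma petridis:
  fixes X B :: "((nat \<Rightarrow> real) \<times> 'z::ab_group_add) set"
  assumes X: "finite X" "X \<subseteq> TT d" and B: "finite B"
    and minim: "\<And>Y. Y \<subseteq> X \<Longrightarrow> Y \<noteq> {} \<Longrightarrow>
        real (card (sumset d X B)) * card Y \<le> real (card (sumset d Y B)) * card X"
    and C: "finite C"
  shows "real (card (sumset d (sumset d X B) C)) * card X \<le> real (card (sumset d X B)) * card (sumset d X C)"
  using C
proof (induction C rule: finite_induct)
  case empty
  show ?case by simp
next
  case (insert c C)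
  define XB where "XB = sumset d X B"
  define Y where "Y = {x \<in> X. sumset d (sumset d {x} B) {c} \<subseteq> sumset d XB C}"
  define Z where "Z = {x \<in> X. gadd d x c \<in> sumset d X C}"
  have YX: "Y \<subseteq> X" and ZX: "Z \<subseteq> X" by (auto simp: Y_def Z_def)
  have finXB: "finite XB" using X B by (simp add: XB_def finite_sumset)
  have finY: "finite Y" "finite Z" using YX ZX X finite_subset by blast+
  have ZY: "Z \<subseteq> Y"
  proof
    fix x assume x: "x \<in> Z"
    then have "gadd d x c \<in> sumset d X C" by (simp add: Z_def)
    then obtain x' c' where x': "x' \<in> X" "c' \<in> C" "gadd d x c = gadd d x' c'"
      by (blast elim: sumsetE)
    have "sumset d (sumset d {x} B) {c} \<subseteq> sumset d XB C"
    proof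
      fix y assume "y \<in> sumset d (sumset d {x} B) {c}"
      then obtain b where b: "b \<in> B" "y = gadd d (gadd d x b) c" by (blast elim: sumsetE)
      have "y = gadd d (gadd d x c) b" unfolding b by (metis gadd_assoc gadd_comm)
      also have "\<dots> = gadd d (gadd d x' b) c'" unfolding x'(3) by (metis gadd_assoc gadd_comm)
      finally have y: "y = gadd d (gadd d x' b) c'" .
      have "gadd d x' b \<in> XB" unfolding XB_def by (rule sumsetI[OF x'(1) b(1)])
      then show "y \<in> sumset d XB C" unfolding y by (rule sumsetI[OF _ x'(2)])
    qed
    then show "x \<in> Y" using x by (simp add: Y_def Z_def)
  qed
  have YBsub: "sumset d (sumset d Y B) {c} \<subseteq> sumset d XB C"
  proof
    fix y assume "y \<in> sumset d (sumset d Y B) {c}"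
    then obtain x b where xb: "x \<in> Y" "b \<in> B" "y = gadd d (gadd d x b) c" by (blast elim: sumsetE)
    have "y \<in> sumset d (sumset d {x} B) {c}" unfolding xb(3)
      by (intro sumsetI) (use xb in auto)
    then show "y \<in> sumset d XB C" using xb(1) by (auto simp: Y_def)
  qed
  have ins: "insert c C = {c} \<union> C" by simp
  have A: "sumset d XB (insert c C) \<subseteq> sumset d XB C \<union> (sumset d XB {c} - sumset d (sumset d Y B) {c})"
    using YBsub unfolding ins sumset_Un2 by blast
  have YBXB: "sumset d (sumset d Y B) {c} \<subseteq> sumset d XB {c}"
    unfolding XB_def by (intro sumset_mono YX order_refl)
  have cYBXB: "card (sumset d Y B) \<le> card XB"
    unfolding XB_def by (intro card_mono finite_sumset X B sumset_mono YX order_refl)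
  have c1: "card (sumset d XB {c}) = card XB" by (rule card_sumset_single) (simp add: XB_def sumset_sub)
  have c2: "card (sumset d (sumset d Y B) {c}) = card (sumset d Y B)" by (rule card_sumset_single[OF sumset_sub])
  have cardA: "real (card (sumset d XB (insert c C))) \<le> real (card (sumset d XB C)) + real (card XB) - real (card (sumset d Y B))"
  proof -
    have f1: "finite (sumset d XB C)" "finite (sumset d XB {c})" using finXB insert by (auto simp: finite_sumset)
    have "card (sumset d XB (insert c C)) \<le> card (sumset d XB C \<union> (sumset d XB {c} - sumset d (sumset d Y B) {c}))"
      by (rule card_mono[OF _ A]) (use f1 in auto)
    also have "\<dots> \<le> card (sumset d XB C) + card (sumset d XB {c} - sumset d (sumset d Y B) {c})"
      by (rule card_Un_le)
    also have "card (sumset d XB {c} - sumset d (sumset d Y B) {c}) = card (sumset d XB {c}) - card (sumset d (sumset d Y B) {c})"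
      by (rule card_Diff_subset[OF _ YBXB]) (use finY B in \<open>auto simp: finite_sumset\<close>)
    finally have "card (sumset d XB (insert c C)) \<le> card (sumset d XB C) + (card XB - card (sumset d Y B))"
      unfolding c1 c2 .
    then show ?thesis using cYBXB by linarith
  qed
  have XZ: "X = (X - Z) \<union> Z" using ZX by blast
  have B1: "sumset d X (insert c C) = sumset d X C \<union> sumset d (X - Z) {c}"
  proof -
    have "(X - Z) \<union> Z = X" using ZX by blast
    then have "sumset d X {c} = sumset d ((X - Z) \<union> Z) {c}" by simp
    then have "sumset d X {c} = sumset d (X - Z) {c} \<union> sumset d Z {c}"
      by (simp only: sumset_Un1)
    moreover have "sumset d Z {c} \<subseteq> sumset d X C"
      unfolding sumset_single Z_def by blast
    ultimately show ?thesis unfolding ins sumset_Un2 by blast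
  qed
  have disj: "sumset d X C \<inter> sumset d (X - Z) {c} = {}"
    unfolding sumset_single Z_def by blast
  have cardB: "real (card (sumset d X (insert c C))) = real (card (sumset d X C)) + real (card X) - real (card Z)"
  proof -
    have "card (sumset d X (insert c C)) = card (sumset d X C) + card (sumset d (X - Z) {c})"
      unfolding B1 by (rule card_Un_disjoint) (use X insert disj in \<open>auto simp: finite_sumset\<close>)
    also have "card (sumset d (X - Z) {c}) = card (X - Z)"
      by (rule card_sumset_single) (use X in blast)
    also have "card (X - Z) = card X - card Z" by (rule card_Diff_subset[OF finY(2) ZX])
    finally show ?thesis using card_mono[OF X(1) ZX] by simp
  qed
  have IH: "real (card (sumset d XB C)) * card X \<le> real (card XB) * card (sumset d X C)"
    using insert.IH by (simp add: XB_def)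
  have mY: "real (card XB) * card Y \<le> real (card (sumset d Y B)) * card X"
  proof (cases "Y = {}")
    case True then show ?thesis by simp
  next
    case False then show ?thesis using minim[OF YX] by (simp add: XB_def)
  qed
  have cZY: "real (card Z) \<le> card Y" using card_mono[OF finY(1) ZY] by simp
  define a where "a = real (card (sumset d XB (insert c C)))"
  define b where "b = real (card (sumset d XB C))"
  define s where "s = real (card XB)"
  define y where "y = real (card (sumset d Y B))"
  define cx where "cx = real (card X)"
  define cy where "cy = real (card Y)"
  define cz where "cz = real (card Z)"
  define t where "t = real (card (sumset d X C))"
  have h1: "a \<le> b + s - y" using cardA by (simp add: a_def b_def s_def y_def)
  have h2: "b * cx \<le> s * t" using IH by (simp add: b_def cx_def s_def t_def)
  have h3: "s * cy \<le> y * cx" using mY by (simp add: s_def cy_def y_def cx_def)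
  have h4: "cz \<le> cy" using cZY by (simp add: cz_def cy_def)
  have h5: "0 \<le> cx" "0 \<le> s" by (simp_all add: cx_def s_def)
  have "a * cx \<le> (b + s - y) * cx" using h1 h5 by (simp add: mult_right_mono)
  also have "\<dots> = b * cx + s * cx - y * cx" by (simp add: algebra_simps)
  also have "\<dots> \<le> s * t + s * cx - s * cy" using h2 h3 by linarith
  also have "\<dots> \<le> s * t + s * cx - s * cz" using h4 h5 by (simp add: mult_left_mono)
  also have "\<dots> = s * (t + cx - cz)" by (simp add: algebra_simps)
  finally have "a * cx \<le> s * (t + cx - cz)" .
  then show ?case using cardB by (simp add: a_def cx_def s_def t_def cz_def XB_def)
qed

lemma plunnecke_discrete:
  fixes X B :: "((nat \<Rightarrow> real) \<times> 'z::ab_group_add) set"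
  assumes X: "finite X" "X \<subseteq> TT d" and B: "finite B"
    and minim: "\<And>Y. Y \<subseteq> X \<Longrightarrow> Y \<noteq> {} \<Longrightarrow>
        real (card (sumset d X B)) * card Y \<le> real (card (sumset d Y B)) * card X"
  shows "real (card (sumset d X (msumset d m B))) * card X ^ m \<le> real (card (sumset d X B)) ^ m * card X"
proof (induction m)
  case 0
  then show ?case using X by (simp add: sumset_gzero)
next
  case (Suc m)
  have eq: "sumset d X (msumset d (Suc m) B) = sumset d (sumset d X B) (msumset d m B)"
  proof -
    have "sumset d X (msumset d (Suc m) B) = sumset d X (sumset d B (msumset d m B))"
      by (simp add: sumset_comm[of d "msumset d m B" B])
    also have "\<dots> = sumset d (sumset d X B) (msumset d m B)" by (rule sumset_assoc[symmetric])
    finally show ?thesis .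
  qed
  have P: "real (card (sumset d (sumset d X B) (msumset d m B))) * card X
      \<le> real (card (sumset d X B)) * card (sumset d X (msumset d m B))"
    by (rule petridis[OF X B minim]) (auto simp: finite_msumset B)
  have "real (card (sumset d X (msumset d (Suc m) B))) * card X ^ Suc m
      = (real (card (sumset d (sumset d X B) (msumset d m B))) * card X) * card X ^ m"
    unfolding eq by (simp add: algebra_simps)
  also have "\<dots> \<le> (real (card (sumset d X B)) * card (sumset d X (msumset d m B))) * card X ^ m"
    by (rule mult_right_mono[OF P]) simp
  also have "\<dots> = real (card (sumset d X B)) * (real (card (sumset d X (msumset d m B))) * card X ^ m)"
    by (simp add: algebra_simps)
  also have "\<dots> \<le> real (card (sumset d X B)) * (real (card (sumset d X B)) ^ m * card X)"
    by (rule mult_left_mono[OF Suc.IH]) simp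
  finally show ?case by (simp add: algebra_simps)
qed

lemma exists_min_subset:
  fixes D B :: "((nat \<Rightarrow> real) \<times> 'z::ab_group_add) set"
  assumes "finite D" "D \<noteq> {}"
  shows "\<exists>X. X \<subseteq> D \<and> X \<noteq> {} \<and> (\<forall>Y. Y \<subseteq> D \<longrightarrow> Y \<noteq> {} \<longrightarrow>
            real (card (sumset d X B)) / card X \<le> real (card (sumset d Y B)) / card Y)"
proof -
  define F where "F = {Y. Y \<subseteq> D \<and> Y \<noteq> {}}"
  define f where "f = (\<lambda>Y. real (card (sumset d Y B)) / card Y)"
  have finF: "finite F" unfolding F_def using assms(1) by (auto intro: finite_subset[of _ "Pow D"])
  have neF: "F \<noteq> {}" using assms(2) by (auto simp: F_def)
  have "Min (f ` F) \<in> f ` F" using finF neF by (intro Min_in) auto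
  then obtain X where X: "X \<in> F" "f X = Min (f ` F)" by auto
  have "\<forall>Y\<in>F. f X \<le> f Y" using X finF by auto
  then have "\<forall>Y. Y \<subseteq> D \<longrightarrow> Y \<noteq> {} \<longrightarrow> f X \<le> f Y" unfolding F_def by blast
  moreover have "X \<subseteq> D" "X \<noteq> {}" using X(1) unfolding F_def by blast+
  ultimately show ?thesis unfolding f_def by blast
qed

lemma plunnecke_min:
  fixes D B :: "((nat \<Rightarrow> real) \<times> 'z::ab_group_add) set"
  assumes D: "finite D" "D \<noteq> {}" "D \<subseteq> TT d" and B: "finite B"
  shows "\<exists>X. X \<subseteq> D \<and> X \<noteq> {} \<and>
     real (card (sumset d X B)) / card X \<le> real (card (sumset d D B)) / card D \<and>
     (\<forall>m. real (card (sumset d X (msumset d m B))) \<le> (real (card (sumset d X B)) / card X) ^ m * card X)"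
proof -
  obtain X where X: "X \<subseteq> D" "X \<noteq> {}" and mn: "\<And>Y. Y \<subseteq> D \<Longrightarrow> Y \<noteq> {} \<Longrightarrow>
            real (card (sumset d X B)) / card X \<le> real (card (sumset d Y B)) / card Y"
    using exists_min_subset[OF D(1,2), of d B] by blast
  have finX: "finite X" using X D finite_subset by blast
  have cX: "card X > 0" using finX X(2) by (simp add: card_gt_0_iff)
  have XT: "X \<subseteq> TT d" using X D by blast
  have minim: "real (card (sumset d X B)) * card Y \<le> real (card (sumset d Y B)) * card X"
    if "Y \<subseteq> X" "Y \<noteq> {}" for Y
  proof -
    have cY: "card Y > 0" using that finX finite_subset by (auto simp: card_gt_0_iff)
    have "real (card (sumset d X B)) / card X \<le> real (card (sumset d Y B)) / card Y"
      using mn[of Y] that X by auto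
    then show ?thesis using cX cY by (simp add: field_simps)
  qed
  have "real (card (sumset d X (msumset d m B))) \<le> (real (card (sumset d X B)) / card X) ^ m * card X" for m
  proof -
    have h: "real (card (sumset d X (msumset d m B))) * card X ^ m \<le> real (card (sumset d X B)) ^ m * card X"
      by (rule plunnecke_discrete[OF finX XT B minim])
    have "real (card X) ^ m > 0" using cX by simp
    then show ?thesis using h by (simp add: power_divide field_simps)
  qed
  then show ?thesis using X mn[OF order_refl D(2)] by blast
qed



definition gridv :: "nat \<Rightarrow> real set" where
  "gridv N = {x. 0 \<le> x \<and> x < 1 \<and> (\<exists>k::int. x = of_int k / real N)}"

definition grid :: "nat \<Rightarrow> nat \<Rightarrow> ((nat \<Rightarrow> real) \<times> 'z::ab_group_add) set" where
  "grid d N = PiE {..<d} (\<lambda>_. gridv N) \<times> UNIV"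

definition cell0 :: "nat \<Rightarrow> nat \<Rightarrow> ((nat \<Rightarrow> real) \<times> 'z::ab_group_add) set" where
  "cell0 d N = {(tproj d v, 0) | v. \<forall>i<d. 0 \<le> v i \<and> v i \<le> 1 / real N}"

definition Eset :: "nat \<Rightarrow> nat \<Rightarrow> ((nat \<Rightarrow> real) \<times> 'z::ab_group_add) set" where
  "Eset d N = {(tproj d e, 0) | e. \<forall>i<d. e i = 0 \<or> e i = 1 / real N}"

definition gfl :: "nat \<Rightarrow> nat \<Rightarrow> (nat \<Rightarrow> real) \<times> 'z \<Rightarrow> (nat \<Rightarrow> real) \<times> 'z" where
  "gfl d N x = ((\<lambda>i\<in>{..<d}. of_int \<lfloor>real N * fst x i\<rfloor> / real N), snd x)"

definition hbox :: "nat \<Rightarrow> nat \<Rightarrow> (nat \<Rightarrow> real) \<times> 'z \<Rightarrow> ((nat \<Rightarrow> real) \<times> 'z) set" where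
  "hbox d N p = PiE {..<d} (\<lambda>i. {fst p i ..< fst p i + 1 / real N}) \<times> {snd p}"

lemma cell0_iff: "x \<in> cell0 d N \<longleftrightarrow> (\<exists>v. x = (tproj d v, 0) \<and> (\<forall>i<d. 0 \<le> v i \<and> v i \<le> 1 / real N))"
  unfolding cell0_def mem_Collect_eq by blast

lemma Eset_iff: "x \<in> Eset d N \<longleftrightarrow> (\<exists>e. x = (tproj d e, 0) \<and> (\<forall>i<d. e i = 0 \<or> e i = 1 / real N))"
  unfolding Eset_def mem_Collect_eq by blast

lemma gridv_frac:
  assumes "N > 0" shows "frac (of_int k / real N) \<in> gridv N"
proof -
  have e: "frac (of_int k / real N) = of_int (k - \<lfloor>of_int k / real N\<rfloor> * int N) / real N"
    using assms by (simp add: frac_def field_simps)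
  have "0 \<le> frac (of_int k / real N)" "frac (of_int k / real N) < 1" by (simp_all add: frac_lt_1)
  then show ?thesis unfolding gridv_def mem_Collect_eq using e by blast
qed

lemma gridvE:
  assumes "x \<in> gridv N" "N > 0"
  obtains k :: int where "x = of_int k / real N" "0 \<le> k" "k < int N"
proof -
  obtain k :: int where k: "x = of_int k / real N" and x: "0 \<le> x" "x < 1" using assms(1) by (auto simp: gridv_def)
  have "0 \<le> real_of_int k" "real_of_int k < real N" using x k assms(2) by (auto simp: field_simps)
  then have "0 \<le> k" "k < int N" by linarith+
  then show ?thesis using k that by blast
qed

lemma finite_gridv: "N > 0 \<Longrightarrow> finite (gridv N)"
proof -
  assume N: "N > 0"
  have "gridv N \<subseteq> (\<lambda>k. of_int k / real N) ` {0..<int N}"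
  proof
    fix x assume "x \<in> gridv N"
    then obtain k where "x = of_int k / real N" "0 \<le> k" "k < int N" using gridvE N by blast
    then show "x \<in> (\<lambda>k. of_int k / real N) ` {0..<int N}" by auto
  qed
  then show ?thesis using finite_subset by blast
qed

lemma finite_grid: "N > 0 \<Longrightarrow> finite (grid d N :: ((nat \<Rightarrow> real) \<times> 'z::{ab_group_add,finite}) set)"
  unfolding grid_def by (intro finite_cartesian_product finite_PiE finite_gridv) auto

lemma gridv_sub: "gridv N \<subseteq> {0..<1}"
  unfolding gridv_def by auto

lemma grid_sub: "grid d N \<subseteq> TT d"
  unfolding grid_def torus_def
  by (rule Sigma_mono[OF PiE_mono[OF gridv_sub]]) auto

lemma grid_apply: "p \<in> grid d N \<Longrightarrow> i < d \<Longrightarrow> fst p i \<in> gridv N"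
  unfolding grid_def mem_Times_iff by (meson PiE_mem lessThan_iff)

lemma grid_iff: "p \<in> grid d N \<longleftrightarrow> p \<in> TT d \<and> (\<forall>i<d. fst p i \<in> gridv N)"
proof
  assume "p \<in> grid d N" then show "p \<in> TT d \<and> (\<forall>i<d. fst p i \<in> gridv N)"
    using grid_sub grid_apply by blast
next
  assume h: "p \<in> TT d \<and> (\<forall>i<d. fst p i \<in> gridv N)"
  then have "fst p \<in> torus d" by (simp add: mem_Times_iff)
  then have "fst p \<in> PiE {..<d} (\<lambda>_. gridv N)"
    using h by (intro PiE_I) (auto intro: torus_out)
  then show "p \<in> grid d N" unfolding grid_def by (simp add: mem_Times_iff)
qed

lemma tproj_grid:
  assumes "N > 0" "\<And>i. i < d \<Longrightarrow> \<exists>k::int. v i = of_int k / real N"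
  shows "(tproj d v, z) \<in> grid d N"
  unfolding grid_iff
proof (intro conjI allI impI)
  show "(tproj d v, z) \<in> TT d" by (simp add: tproj_in_torus)
  fix i assume i: "i < d"
  then obtain k :: int where "v i = of_int k / real N" using assms(2) by blast
  then show "fst (tproj d v, z) i \<in> gridv N" using gridv_frac[OF assms(1)] i by (simp add: tproj_apply)
qed

lemma gadd_grid:
  assumes N: "N > 0" and p: "p \<in> grid d N" and q: "q \<in> grid d N"
  shows "gadd d p q \<in> grid d N"
  unfolding gadd_def
proof (rule tproj_grid[OF N])
  fix i assume i: "i < d"
  obtain k where k: "fst p i = of_int k / real N" using gridvE[OF grid_apply[OF p i] N] by blast
  obtain l where l: "fst q i = of_int l / real N" using gridvE[OF grid_apply[OF q i] N] by blast
  show "\<exists>m::int. fst p i + fst q i = of_int m / real N"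
    by (rule exI[of _ "k + l"]) (simp add: k l add_divide_distrib)
qed

lemma Eset_grid:
  assumes N: "N > 0" shows "Eset d N \<subseteq> (grid d N :: ((nat \<Rightarrow> real) \<times> 'z::ab_group_add) set)"
proof
  fix x :: "(nat \<Rightarrow> real) \<times> 'z" assume "x \<in> Eset d N"
  then obtain e where e: "x = (tproj d e, 0)" "\<forall>i<d. e i = 0 \<or> e i = 1 / real N"
    unfolding Eset_iff by blast
  show "x \<in> grid d N" unfolding e(1)
  proof (rule tproj_grid[OF N])
    fix i assume "i < d"
    then have "e i = 0 \<or> e i = 1 / real N" using e by blast
    then show "\<exists>k::int. e i = of_int k / real N"
      by (metis div_0 of_int_0 of_int_1)
  qed
qed

lemma finite_Eset: "N > 0 \<Longrightarrow> finite (Eset d N :: ((nat \<Rightarrow> real) \<times> 'z::{ab_group_add,finite}) set)"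
  using finite_subset[OF Eset_grid finite_grid] by blast

lemma gfl_grid:
  assumes N: "N > 0" and x: "x \<in> TT d"
  shows "gfl d N x \<in> grid d N"
proof -
  have "fst x \<in> torus d" using x by auto
  have "(\<lambda>i\<in>{..<d}. of_int \<lfloor>real N * fst x i\<rfloor> / real N) \<in> PiE {..<d} (\<lambda>_. gridv N)"
  proof (rule restrict_PiE_iff[THEN iffD2], intro ballI)
    fix i assume "i \<in> {..<d}"
    then have xi: "0 \<le> fst x i" "fst x i < 1" using torus_apply[OF \<open>fst x \<in> torus d\<close>] by auto
    have "0 \<le> real N * fst x i" using xi by simp
    then have a: "0 \<le> \<lfloor>real N * fst x i\<rfloor>" by simp
    have "real N * fst x i < real N" using xi N by simp
    then have b: "\<lfloor>real N * fst x i\<rfloor> < int N" by (simp add: floor_less_iff)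
    have "0 \<le> real_of_int \<lfloor>real N * fst x i\<rfloor>" using a by simp
    moreover have "real_of_int \<lfloor>real N * fst x i\<rfloor> < real N" using b by linarith
    ultimately show "of_int \<lfloor>real N * fst x i\<rfloor> / real N \<in> gridv N"
      using N unfolding gridv_def by (auto simp: field_simps)
  qed
  then show ?thesis unfolding gfl_def grid_def by simp
qed

lemma mem_hbox_gfl:
  assumes N: "N > 0" and x: "x \<in> TT d"
  shows "x \<in> hbox d N (gfl d N x)"
proof -
  have fx: "fst x \<in> torus d" using x by auto
  have "fst x \<in> PiE {..<d} (\<lambda>i. {of_int \<lfloor>real N * fst x i\<rfloor> / real N ..< of_int \<lfloor>real N * fst x i\<rfloor> / real N + 1 / real N})"
  proof (rule PiE_I)
    fix i assume "i \<in> {..<d}"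
    have a: "real_of_int \<lfloor>real N * fst x i\<rfloor> \<le> real N * fst x i" by (rule of_int_floor_le)
    have b: "real N * fst x i < real_of_int \<lfloor>real N * fst x i\<rfloor> + 1" by (rule real_of_int_floor_add_one_gt)
    show "fst x i \<in> {of_int \<lfloor>real N * fst x i\<rfloor> / real N ..< of_int \<lfloor>real N * fst x i\<rfloor> / real N + 1 / real N}"
      using a b N by (auto simp: field_simps)
  next
    fix i assume "i \<notin> {..<d}" then show "fst x i = undefined" using torus_out[OF fx] by simp
  qed
  moreover have "PiE {..<d} (\<lambda>i. {fst (gfl d N x) i ..< fst (gfl d N x) i + 1 / real N})
     = PiE {..<d} (\<lambda>i. {of_int \<lfloor>real N * fst x i\<rfloor> / real N ..< of_int \<lfloor>real N * fst x i\<rfloor> / real N + 1 / real N})"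
    by (rule PiE_cong) (simp add: gfl_def)
  moreover have "snd (gfl d N x) = snd x" by (simp add: gfl_def)
  ultimately show ?thesis unfolding hbox_def by (simp add: mem_Times_iff)
qed

lemma grid_upper:
  assumes N: "N > 0" and p: "p \<in> grid d N" and i: "i < d"
  shows "fst p i + 1 / real N \<le> 1"
proof -
  obtain k where k: "fst p i = of_int k / real N" "0 \<le> k" "k < int N"
    using gridvE[OF grid_apply[OF p i] N] by blast
  have "real_of_int k + 1 \<le> real N" using k(3) by linarith
  then show ?thesis using N k(1) by (simp add: field_simps)
qed

lemma hbox_sub_cell:
  assumes N: "N > 0" and p: "p \<in> grid d N"
  shows "hbox d N p \<subseteq> sumset d {p} (cell0 d N)"
proof
  fix x assume x: "x \<in> hbox d N p"
  have xs: "snd x = snd p" and xi: "\<And>i. i < d \<Longrightarrow> fst p i \<le> fst x i \<and> fst x i < fst p i + 1 / real N"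
    and xo: "\<And>i. \<not> i < d \<Longrightarrow> fst x i = undefined"
    using x by (auto simp: hbox_def PiE_iff extensional_def mem_Times_iff)
  have pt: "p \<in> TT d" using p grid_sub by blast
  have ftor: "fst x \<in> torus d"
    unfolding torus_def
  proof (rule PiE_I)
    fix i assume "i \<in> {..<d}"
    then have i: "i < d" by simp
    have "fst p \<in> torus d" using pt by (simp add: mem_Times_iff)
    then have "0 \<le> fst p i" using torus_apply i by blast
    then show "fst x i \<in> {0..<1}" using xi[OF i] grid_upper[OF N p i] by simp
  next
    fix i assume "i \<notin> {..<d}" then show "fst x i = undefined" using xo by simp
  qed
  define v where "v = (\<lambda>i. fst x i - fst p i)"
  have "\<forall>i<d. 0 \<le> v i \<and> v i \<le> 1 / real N" using xi by (force simp: v_def)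
  then have c: "(tproj d v, 0) \<in> cell0 d N" unfolding cell0_iff by blast
  have "gadd d p (tproj d v, 0) = x"
  proof -
    have "tproj d (\<lambda>i. fst p i + fst (tproj d v, 0::'a) i) = tproj d (fst x)"
      by (rule tproj_eqI) (simp add: tproj_apply frac_add_frac v_def)
    then show ?thesis using tproj_torus[OF ftor] xs by (simp add: gadd_def prod_eq_iff)
  qed
  then show "x \<in> sumset d {p} (cell0 d N)" using sumsetI[OF _ c, of p "{p}" d] by simp
qed

lemma cell_sum: "sumset d (cell0 d N) (cell0 d N) \<subseteq> sumset d (Eset d N) (cell0 d N :: ((nat \<Rightarrow> real) \<times> 'z::ab_group_add) set)"
proof
  fix x :: "(nat \<Rightarrow> real) \<times> 'z" assume "x \<in> sumset d (cell0 d N) (cell0 d N)"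
  then obtain a b where ab: "a \<in> cell0 d N" "b \<in> cell0 d N" "x = gadd d a b" by (blast elim: sumsetE)
  obtain u where u: "a = (tproj d u, 0)" "\<forall>i<d. 0 \<le> u i \<and> u i \<le> 1 / real N" using ab(1) unfolding cell0_iff by blast
  obtain v where v: "b = (tproj d v, 0)" "\<forall>i<d. 0 \<le> v i \<and> v i \<le> 1 / real N" using ab(2) unfolding cell0_iff by blast
  define e where "e = (\<lambda>i. if u i + v i \<le> 1 / real N then 0 else 1 / real N)"
  define r where "r = (\<lambda>i. u i + v i - e i)"
  have eE: "(tproj d e, 0) \<in> Eset d N" unfolding Eset_iff by (rule exI[of _ e]) (simp add: e_def)
  have "\<forall>i<d. 0 \<le> r i \<and> r i \<le> 1 / real N"
  proof (intro allI impI)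
    fix i assume "i < d"
    then have "0 \<le> u i" "u i \<le> 1 / real N" "0 \<le> v i" "v i \<le> 1 / real N" using u(2) v(2) by auto
    then show "0 \<le> r i \<and> r i \<le> 1 / real N" by (simp add: r_def e_def)
  qed
  then have rC: "(tproj d r, 0) \<in> cell0 d N" unfolding cell0_iff by blast
  have "x = gadd d (tproj d e, 0) (tproj d r, 0)"
  proof -
    have "tproj d (\<lambda>i. tproj d u i + tproj d v i) = tproj d (\<lambda>i. tproj d e i + tproj d r i)"
      by (rule tproj_eqI) (simp add: tproj_apply frac_add_frac frac_frac_add r_def)
    then show ?thesis by (simp add: ab(3) u(1) v(1) gadd_def)
  qed
  then show "x \<in> sumset d (Eset d N) (cell0 d N)" using sumsetI[OF eE rC] by simp
qed

lemma B_sub_cells: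
  assumes N: "N > 0" and B: "B \<subseteq> TT d"
  shows "B \<subseteq> sumset d (gfl d N ` B) (cell0 d N)"
proof
  fix b assume b: "b \<in> B"
  then have "b \<in> hbox d N (gfl d N b)" using mem_hbox_gfl[OF N] B by blast
  also have "\<dots> \<subseteq> sumset d {gfl d N b} (cell0 d N)" by (rule hbox_sub_cell[OF N gfl_grid[OF N]]) (use B b in blast)
  also have "\<dots> \<subseteq> sumset d (gfl d N ` B) (cell0 d N)" using b by (intro sumset_mono) auto
  finally show "b \<in> sumset d (gfl d N ` B) (cell0 d N)" .
qed

lemma sum_step:
  assumes N: "N > 0" and B: "B \<subseteq> TT d"
  shows "sumset d (sumset d S (cell0 d N)) B \<subseteq> sumset d (sumset d S (sumset d (gfl d N ` B) (Eset d N))) (cell0 d N)"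
proof -
  let ?C = "cell0 d N" and ?G = "gfl d N ` B" and ?E = "Eset d N"
  have "sumset d (sumset d S ?C) B \<subseteq> sumset d (sumset d S ?C) (sumset d ?G ?C)"
    by (intro sumset_mono order_refl B_sub_cells[OF N B])
  also have "\<dots> = sumset d S (sumset d ?C (sumset d ?G ?C))" by (rule sumset_assoc)
  also have "sumset d ?C (sumset d ?G ?C) = sumset d ?G (sumset d ?C ?C)"
    by (metis sumset_assoc sumset_comm)
  also have "sumset d ?G (sumset d ?C ?C) \<subseteq> sumset d ?G (sumset d ?E ?C)"
    by (intro sumset_mono order_refl cell_sum)
  also have "sumset d ?G (sumset d ?E ?C) = sumset d (sumset d ?G ?E) ?C"
    by (rule sumset_assoc[symmetric])
  finally have "sumset d (sumset d S ?C) B \<subseteq> sumset d S (sumset d (sumset d ?G ?E) ?C)"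
    by (meson order_refl subset_trans sumset_mono)
  also have "\<dots> = sumset d (sumset d S (sumset d ?G ?E)) ?C" by (rule sumset_assoc[symmetric])
  finally show ?thesis .
qed

lemma msum_cells:
  assumes N: "N > 0" and B: "B \<subseteq> TT d" and X: "X \<subseteq> TT d"
  shows "sumset d (sumset d X (cell0 d N)) (msumset d m B)
     \<subseteq> sumset d (sumset d X (msumset d m (sumset d (gfl d N ` B) (Eset d N)))) (cell0 d N)"
proof (induction m)
  case 0
  have "sumset d (sumset d X (cell0 d N)) {gzero d} = sumset d X (cell0 d N)"
    by (rule sumset_gzero[OF sumset_sub])
  moreover have "sumset d X {gzero d} = X" by (rule sumset_gzero[OF X])
  ultimately show ?case by simp
next
  case (Suc m)
  let ?Bd = "sumset d (gfl d N ` B) (Eset d N)"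
  have "sumset d (sumset d X (cell0 d N)) (msumset d (Suc m) B)
      = sumset d (sumset d (sumset d X (cell0 d N)) (msumset d m B)) B"
    by (simp add: sumset_assoc)
  also have "\<dots> \<subseteq> sumset d (sumset d (sumset d X (msumset d m ?Bd)) (cell0 d N)) B"
    by (intro sumset_mono Suc.IH order_refl)
  also have "\<dots> \<subseteq> sumset d (sumset d (sumset d X (msumset d m ?Bd)) ?Bd) (cell0 d N)"
    by (rule sum_step[OF N B])
  also have "\<dots> = sumset d (sumset d X (msumset d (Suc m) ?Bd)) (cell0 d N)"
    by (simp add: sumset_assoc)
  finally show ?case .
qed



abbreviation UM :: "real measure" where "UM \<equiv> restrict_space lborel {0..<1::real}"

lemma prob_UM: "prob_space UM"
  by (rule prob_space_restrict_space) simp_all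

lemma sets_UM: "F \<in> sets borel \<Longrightarrow> F \<subseteq> {0..<1} \<Longrightarrow> F \<in> sets UM"
  by (subst sets_restrict_space_iff) auto

lemma emeasure_UM: "F \<subseteq> {0..<1} \<Longrightarrow> emeasure UM F = emeasure lborel F"
  by (rule emeasure_restrict_space) auto

lemma prob_haar: "prob_space (haar d :: ((nat \<Rightarrow> real) \<times> 'z::{ab_group_add,finite}) measure)"
  unfolding haar_def
  by (intro prob_space_pair prob_space_PiM prob_UM prob_space_uniform_count_measure) auto

lemma finite_haar: "finite_measure (haar d :: ((nat \<Rightarrow> real) \<times> 'z::{ab_group_add,finite}) measure)"
  using prob_haar prob_space.finite_measure by blast

lemma psf_UM: "product_sigma_finite (\<lambda>_::nat. UM)"
  unfolding product_sigma_finite_def using prob_UM prob_space_imp_sigma_finite by blast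

lemma haar_box_sets:
  assumes "\<And>i. i < d \<Longrightarrow> F i \<in> sets borel" "\<And>i. i < d \<Longrightarrow> F i \<subseteq> {0..<1}"
  shows "PiE {..<d} F \<times> {z} \<in> sets (haar d :: ((nat \<Rightarrow> real) \<times> 'z::{ab_group_add,finite}) measure)"
  unfolding haar_def
  by (intro pair_measureI sets_PiM_I_finite sets_UM assms) (auto simp: sets_uniform_count_measure)

lemma lborel_sub01_finite: "F \<subseteq> {0..<1::real} \<Longrightarrow> emeasure lborel F \<noteq> \<top>"
proof -
  assume "F \<subseteq> {0..<1}"
  then have "F \<subseteq> {0..1::real}" by auto
  then have "emeasure lborel F \<le> emeasure lborel {0..1::real}" by (rule emeasure_mono) simp
  then show ?thesis by (auto simp: top_unique)
qed

lemma haar_box_measure: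
  assumes F: "\<And>i. i < d \<Longrightarrow> F i \<in> sets borel" "\<And>i. i < d \<Longrightarrow> F i \<subseteq> {0..<1}"
  shows "measure (haar d :: ((nat \<Rightarrow> real) \<times> 'z::{ab_group_add,finite}) measure) (PiE {..<d} F \<times> {z})
     = (\<Prod>i<d. measure lborel (F i)) / card (UNIV :: 'z set)"
proof -
  let ?P = "PiM {..<d} (\<lambda>_::nat. UM)" and ?U = "uniform_count_measure (UNIV :: 'z set)"
  interpret U: prob_space ?U by (rule prob_space_uniform_count_measure) auto
  have e1: "emeasure (?P \<Otimes>\<^sub>M ?U) (PiE {..<d} F \<times> {z}) = emeasure ?P (PiE {..<d} F) * emeasure ?U {z}"
    by (rule U.emeasure_pair_measure_Times) (auto intro!: sets_PiM_I_finite sets_UM F simp: sets_uniform_count_measure)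
  have e2: "emeasure ?P (PiE {..<d} F) = (\<Prod>i<d. emeasure UM (F i))"
    by (rule product_sigma_finite.emeasure_PiM[OF psf_UM]) (auto intro!: sets_UM F)
  have e3: "(\<Prod>i<d. emeasure UM (F i)) = (\<Prod>i<d. ennreal (measure lborel (F i)))"
  proof (rule prod.cong[OF refl])
    fix i assume "i \<in> {..<d}"
    then have "F i \<subseteq> {0..<1}" using F(2) by simp
    then show "emeasure UM (F i) = ennreal (measure lborel (F i))"
      by (simp only: emeasure_UM emeasure_eq_ennreal_measure[OF lborel_sub01_finite])
  qed
  have e4: "emeasure ?U {z} = ennreal (1 / card (UNIV :: 'z set))"
    by (simp add: emeasure_uniform_count_measure)
  define P where "P = (\<Prod>i<d. measure lborel (F i))"
  have P0: "0 \<le> P" unfolding P_def by (intro prod_nonneg) auto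
  have e5: "(\<Prod>i<d. ennreal (measure lborel (F i))) = ennreal P"
    unfolding P_def by (rule prod_ennreal) auto
  have "emeasure (haar d) (PiE {..<d} F \<times> {z}) = ennreal (P * (1 / card (UNIV :: 'z set)))"
    unfolding haar_def e1 e2 e3 e4 e5 using P0 by (simp only: ennreal_mult[symmetric] of_nat_0_le_iff divide_nonneg_nonneg zero_le_one)
  then have "measure (haar d) (PiE {..<d} F \<times> {z}) = P * (1 / card (UNIV :: 'z set))"
    by (rule measure_eq_emeasure_eq_ennreal[rotated]) (use P0 in simp)
  then show ?thesis by (simp add: P_def)
qed


definition ccl :: "nat \<Rightarrow> real \<Rightarrow> real set" where
  "ccl N a = ({a..<1} \<inter> {..a + 1 / real N}) \<union> {0..a + 1 / real N - 1}"

lemma frac_ge1: "1 \<le> s \<Longrightarrow> s < 2 \<Longrightarrow> frac s = s - 1"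
proof -
  assume "1 \<le> s" "s < 2"
  then have "\<lfloor>s\<rfloor> = 1" by (simp add: floor_eq_iff)
  then show ?thesis by (simp add: frac_def)
qed

lemma ccl_iff:
  assumes a: "0 \<le> a" "a < 1" and N: "N > 0"
  shows "x \<in> ccl N a \<longleftrightarrow> (\<exists>t. 0 \<le> t \<and> t \<le> 1 / real N \<and> x = frac (a + t))"
proof -
  have w: "0 < 1 / real N" "1 / real N \<le> 1" using N by (auto simp: field_simps)
  show ?thesis
  proof
    assume "x \<in> ccl N a"
    then consider "a \<le> x" "x < 1" "x \<le> a + 1 / real N" | "0 \<le> x" "x \<le> a + 1 / real N - 1"
      unfolding ccl_def by auto
    then show "\<exists>t. 0 \<le> t \<and> t \<le> 1 / real N \<and> x = frac (a + t)"
    proof cases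
      case 1
      then show ?thesis using a by (intro exI[of _ "x - a"]) (simp add: frac_id)
    next
      case 2
      have x1: "x < 1" using 2 w a by linarith
      have "frac (x + 1) = frac x" by (metis frac_add_of_int_right of_int_1)
      then have "frac (a + (x + 1 - a)) = x" using 2 x1 by (simp add: frac_id)
      then show ?thesis using 2 a by (intro exI[of _ "x + 1 - a"]) simp
    qed
  next
    assume "\<exists>t. 0 \<le> t \<and> t \<le> 1 / real N \<and> x = frac (a + t)"
    then obtain t where t: "0 \<le> t" "t \<le> 1 / real N" "x = frac (a + t)" by blast
    show "x \<in> ccl N a"
    proof (cases "a + t < 1")
      case True
      then show ?thesis using t a by (simp add: ccl_def frac_id)
    next
      case False
      have "t \<le> 1" using t w by linarith
      then have "frac (a + t) = a + t - 1" using a t False by (intro frac_ge1) auto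
      then show ?thesis using t a False by (simp add: ccl_def)
    qed
  qed
qed

lemma ccl_sub: "N > 0 \<Longrightarrow> 0 \<le> a \<Longrightarrow> a < 1 \<Longrightarrow> ccl N a \<subseteq> {0..<1}"
proof -
  assume N: "N > 0" and a: "a < 1" and a0: "0 \<le> a"
  have "1 / real N \<le> 1" using N by (auto simp: field_simps)
  then show ?thesis using a a0 unfolding ccl_def by auto
qed

lemma ccl_borel: "ccl N a \<in> sets borel"
  unfolding ccl_def by measurable

lemma ccl_measure:
  assumes a: "0 \<le> a" "a < 1" and N: "N > 0"
  shows "measure lborel (ccl N a) \<le> 1 / real N"
proof -
  define w where "w = 1 / real N"
  have w: "0 < w" "w \<le> 1" using N by (auto simp: field_simps w_def)
  have "emeasure lborel (ccl N a) \<le> ennreal w"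
  proof (cases "a + w < 1")
    case True
    then have "ccl N a \<subseteq> {a..a+w}" unfolding ccl_def w_def by auto
    then have "emeasure lborel (ccl N a) \<le> emeasure lborel {a..a+w}" by (rule emeasure_mono) simp
    also have "\<dots> = ennreal w" using w by simp
    finally show ?thesis .
  next
    case False
    then have "ccl N a \<subseteq> {a..1} \<union> {0..a+w-1}" unfolding ccl_def w_def by auto
    then have "emeasure lborel (ccl N a) \<le> emeasure lborel ({a..1} \<union> {0..a+w-1})" by (rule emeasure_mono) simp
    also have "\<dots> \<le> emeasure lborel {a..1} + emeasure lborel {0..a+w-1}" by (rule emeasure_subadditive) simp_all
    also have "\<dots> = ennreal (1 - a) + ennreal (a + w - 1)" using a False by simp
    also have "\<dots> = ennreal w" using a False by (subst ennreal_plus[symmetric]) auto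
    finally show ?thesis .
  qed
  then show ?thesis unfolding measure_def w_def by (intro enn2real_leI) (auto simp: w_def)
qed

lemma cell_eq:
  assumes N: "N > 0" and p: "p \<in> TT d"
  shows "sumset d {p} (cell0 d N) = PiE {..<d} (\<lambda>i. ccl N (fst p i)) \<times> {snd p}"
proof -
  have fp: "fst p \<in> torus d" using p by (simp add: mem_Times_iff)
  have pa: "0 \<le> fst p i" "fst p i < 1" if "i < d" for i using torus_apply[OF fp that] by auto
  show ?thesis
  proof (rule set_eqI)
    fix y :: "(nat \<Rightarrow> real) \<times> 'a"
    show "y \<in> sumset d {p} (cell0 d N) \<longleftrightarrow> y \<in> PiE {..<d} (\<lambda>i. ccl N (fst p i)) \<times> {snd p}"
    proof
      assume "y \<in> sumset d {p} (cell0 d N)"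
      then obtain c where c: "c \<in> cell0 d N" "y = gadd d p c" by (blast elim: sumsetE)
      then obtain v where v: "c = (tproj d v, 0)" "\<forall>i<d. 0 \<le> v i \<and> v i \<le> 1 / real N"
        unfolding cell0_iff by blast
      have y: "y = (tproj d (\<lambda>i. fst p i + tproj d v i), snd p)" using c v by (simp add: gadd_def)
      have "tproj d (\<lambda>i. fst p i + tproj d v i) \<in> PiE {..<d} (\<lambda>i. ccl N (fst p i))"
      proof (rule PiE_I)
        fix i assume "i \<in> {..<d}"
        then have i: "i < d" by simp
        have "tproj d (\<lambda>i. fst p i + tproj d v i) i = frac (fst p i + v i)"
          using i by (simp add: tproj_apply frac_add_frac)
        then show "tproj d (\<lambda>i. fst p i + tproj d v i) i \<in> ccl N (fst p i)"
          unfolding ccl_iff[OF pa[OF i] N] using v(2) i by blast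
      next
        fix i assume "i \<notin> {..<d}" then show "tproj d (\<lambda>i. fst p i + tproj d v i) i = undefined"
          by (simp add: tproj_out)
      qed
      then show "y \<in> PiE {..<d} (\<lambda>i. ccl N (fst p i)) \<times> {snd p}" using y by simp
    next
      assume y: "y \<in> PiE {..<d} (\<lambda>i. ccl N (fst p i)) \<times> {snd p}"
      have ex: "\<forall>i\<in>{..<d}. \<exists>t. 0 \<le> t \<and> t \<le> 1 / real N \<and> fst y i = frac (fst p i + t)"
      proof
        fix i assume "i \<in> {..<d}"
        then have i: "i < d" by simp
        have "fst y i \<in> ccl N (fst p i)" using y i by (auto simp: PiE_iff mem_Times_iff)
        then show "\<exists>t. 0 \<le> t \<and> t \<le> 1 / real N \<and> fst y i = frac (fst p i + t)"
          unfolding ccl_iff[OF pa[OF i] N] .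
      qed
      then obtain t where t: "\<forall>i\<in>{..<d}. 0 \<le> t i \<and> t i \<le> 1 / real N \<and> fst y i = frac (fst p i + t i)"
        by (metis (no_types, lifting) bchoice)
      have cc: "(tproj d t, 0) \<in> cell0 d N" unfolding cell0_iff using t by auto
      have fy: "fst y \<in> torus d"
      proof -
        have "PiE {..<d} (\<lambda>i. ccl N (fst p i)) \<subseteq> torus d"
          unfolding torus_def by (rule PiE_mono) (use ccl_sub[OF N] pa in blast)
        then show ?thesis using y by (auto simp: mem_Times_iff)
      qed
      have "fst y = tproj d (\<lambda>i. fst p i + tproj d t i)"
        unfolding eq_tproj_iff[OF fy] using t by (simp add: tproj_apply frac_add_frac)
      then have "y = gadd d p (tproj d t, 0)" using y by (simp add: gadd_def prod_eq_iff mem_Times_iff)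
      then show "y \<in> sumset d {p} (cell0 d N)" using sumsetI[OF _ cc, of p "{p}"] by simp
    qed
  qed
qed

lemma cell_sets_measure:
  assumes N: "N > 0" and p: "p \<in> TT d"
  shows "sumset d {p} (cell0 d N) \<in> sets (haar d :: ((nat \<Rightarrow> real) \<times> 'z::{ab_group_add,finite}) measure)"
    and "measure (haar d) (sumset d {p} (cell0 d N :: ((nat \<Rightarrow> real) \<times> 'z) set)) \<le> (1 / real N) ^ d / real CARD('z)"
proof -
  have fp: "fst p \<in> torus d" using p by (simp add: mem_Times_iff)
  have pa: "0 \<le> fst p i" "fst p i < 1" if "i < d" for i using torus_apply[OF fp that] by auto
  show "sumset d {p} (cell0 d N) \<in> sets (haar d :: ((nat \<Rightarrow> real) \<times> 'z::{ab_group_add,finite}) measure)"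
    unfolding cell_eq[OF N p] by (intro haar_box_sets ccl_borel ccl_sub[OF N] pa)
  have "measure (haar d) (sumset d {p} (cell0 d N :: ((nat \<Rightarrow> real) \<times> 'z) set))
      = (\<Prod>i<d. measure lborel (ccl N (fst p i))) / card (UNIV :: 'z set)"
    unfolding cell_eq[OF N p] by (intro haar_box_measure ccl_borel ccl_sub[OF N] pa)
  also have "\<dots> \<le> (\<Prod>i<d. 1 / real N) / card (UNIV :: 'z set)"
  proof -
    have "\<forall>i\<in>{..<d}. 0 \<le> measure lborel (ccl N (fst p i)) \<and> measure lborel (ccl N (fst p i)) \<le> 1 / real N"
      using ccl_measure[OF pa(1) pa(2) N] by auto
    then show ?thesis by (intro divide_right_mono prod_mono) auto
  qed
  finally show "measure (haar d) (sumset d {p} (cell0 d N :: ((nat \<Rightarrow> real) \<times> 'z) set)) \<le> (1 / real N) ^ d / real CARD('z)"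
    by simp
qed

lemma hbox_sets_measure:
  assumes N: "N > 0" and p: "p \<in> grid d N"
  shows "hbox d N p \<in> sets (haar d :: ((nat \<Rightarrow> real) \<times> 'z::{ab_group_add,finite}) measure)"
    and "measure (haar d) (hbox d N p :: ((nat \<Rightarrow> real) \<times> 'z) set) = (1 / real N) ^ d / real CARD('z)"
proof -
  have sub: "{fst p i..<fst p i + 1 / real N} \<subseteq> {0..<1}" if "i < d" for i
    using grid_upper[OF N p that] gridv_sub grid_apply[OF p that] by force
  show "hbox d N p \<in> sets (haar d :: ((nat \<Rightarrow> real) \<times> 'z::{ab_group_add,finite}) measure)"
    unfolding hbox_def by (intro haar_box_sets sub) simp
  have "measure (haar d) (hbox d N p :: ((nat \<Rightarrow> real) \<times> 'z) set)
      = (\<Prod>i<d. measure lborel {fst p i..<fst p i + 1 / real N}) / card (UNIV :: 'z set)"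
    unfolding hbox_def by (intro haar_box_measure sub) simp
  also have "\<dots> = (\<Prod>i<d. 1 / real N) / card (UNIV :: 'z set)"
  proof -
    have "measure lborel {a..<a + 1 / real N} = 1 / real N" for a
      by (rule measure_eq_emeasure_eq_ennreal) (use N in auto)
    then show ?thesis by simp
  qed
  finally show "measure (haar d) (hbox d N p :: ((nat \<Rightarrow> real) \<times> 'z) set) = (1 / real N) ^ d / real CARD('z)"
    by simp
qed

lemma hbox_disjoint:
  assumes N: "N > 0" and p: "p \<in> grid d N" and q: "q \<in> grid d N" and pq: "p \<noteq> q"
  shows "hbox d N p \<inter> hbox d N q = {}"
proof (rule ccontr)
  assume "hbox d N p \<inter> hbox d N q \<noteq> {}"
  then obtain x where xp: "x \<in> hbox d N p" and xq: "x \<in> hbox d N q" by blast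
  have s: "snd p = snd q" using xp xq by (simp add: hbox_def mem_Times_iff)
  have "fst p = fst q"
  proof
    fix i show "fst p i = fst q i"
    proof (cases "i < d")
      case True
      obtain k where k: "fst p i = of_int k / real N" using gridvE[OF grid_apply[OF p True] N] by blast
      obtain l where l: "fst q i = of_int l / real N" using gridvE[OF grid_apply[OF q True] N] by blast
      have "fst x i \<in> {fst p i..<fst p i + 1 / real N}" "fst x i \<in> {fst q i..<fst q i + 1 / real N}"
        using xp xq True by (auto simp: hbox_def mem_Times_iff PiE_iff)
      then have "of_int k \<le> real N * fst x i" "real N * fst x i < of_int k + 1"
        "of_int l \<le> real N * fst x i" "real N * fst x i < of_int l + 1"
        using N unfolding k l by (auto simp: field_simps)
      then have "k = l" by linarith
      then show ?thesis using k l by simp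
    next
      case False
      have "p \<in> TT d" "q \<in> TT d" using p q grid_sub by blast+
      then have "fst p \<in> torus d" "fst q \<in> torus d" by (simp_all add: mem_Times_iff)
      then show ?thesis using torus_out[of "fst p" d i] torus_out[of "fst q" d i] False by simp
    qed
  qed
  then show False using s pq by (simp add: prod_eq_iff)
qed

lemma hbox_union_measure:
  assumes N: "N > 0" and S: "finite S" "S \<subseteq> grid d N"
  shows "(\<Union>p\<in>S. hbox d N p) \<in> sets (haar d :: ((nat \<Rightarrow> real) \<times> 'z::{ab_group_add,finite}) measure)"
    and "measure (haar d) (\<Union>p\<in>S. hbox d N p :: ((nat \<Rightarrow> real) \<times> 'z) set) = real (card S) * ((1 / real N) ^ d / real CARD('z))"
proof -
  interpret M: finite_measure "haar d :: ((nat \<Rightarrow> real) \<times> 'z) measure" by (rule finite_haar)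
  have hs: "\<And>p. p \<in> S \<Longrightarrow> hbox d N p \<in> sets (haar d :: ((nat \<Rightarrow> real) \<times> 'z) measure)"
    using hbox_sets_measure(1)[OF N] S by blast
  show "(\<Union>p\<in>S. hbox d N p) \<in> sets (haar d :: ((nat \<Rightarrow> real) \<times> 'z::{ab_group_add,finite}) measure)"
    by (rule sets.finite_UN[OF S(1)]) (use hs in blast)
  have "measure (haar d) (\<Union>p\<in>S. hbox d N p :: ((nat \<Rightarrow> real) \<times> 'z) set) = (\<Sum>p\<in>S. measure (haar d) (hbox d N p :: ((nat \<Rightarrow> real) \<times> 'z) set))"
  proof (rule measure_finite_Union[OF S(1)])
    show "(\<lambda>p. hbox d N p) ` S \<subseteq> sets (haar d)" using hs by blast
    show "disjoint_family_on (\<lambda>p. hbox d N p) S"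
      unfolding disjoint_family_on_def using hbox_disjoint[OF N] S(2) by blast
    show "\<And>i. i \<in> S \<Longrightarrow> emeasure (haar d) (hbox d N i) \<noteq> \<infinity>"
      using M.emeasure_finite by (simp add: infinity_ennreal_def)
  qed
  also have "\<dots> = (\<Sum>p\<in>S. (1 / real N) ^ d / real CARD('z))"
    by (rule sum.cong[OF refl]) (use hbox_sets_measure(2)[OF N] S(2) in blast)
  finally show "measure (haar d) (\<Union>p\<in>S. hbox d N p :: ((nat \<Rightarrow> real) \<times> 'z) set) = real (card S) * ((1 / real N) ^ d / real CARD('z))"
    by simp
qed

lemma sumset_UN: "sumset d S Y = (\<Union>p\<in>S. sumset d {p} Y)"
  unfolding set_eq_iff UN_iff sumset_iff by blast

lemma cells_sets_measure:
  assumes N: "N > 0" and S: "finite S" "S \<subseteq> TT d"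
  shows "sumset d S (cell0 d N) \<in> sets (haar d :: ((nat \<Rightarrow> real) \<times> 'z::{ab_group_add,finite}) measure)"
    and "measure (haar d) (sumset d S (cell0 d N :: ((nat \<Rightarrow> real) \<times> 'z) set)) \<le> real (card S) * ((1 / real N) ^ d / real CARD('z))"
proof -
  have hs: "\<And>p. p \<in> S \<Longrightarrow> sumset d {p} (cell0 d N) \<in> sets (haar d :: ((nat \<Rightarrow> real) \<times> 'z) measure)"
    using cell_sets_measure(1)[OF N] S by blast
  show "sumset d S (cell0 d N) \<in> sets (haar d :: ((nat \<Rightarrow> real) \<times> 'z::{ab_group_add,finite}) measure)"
    unfolding sumset_UN[of d S] by (rule sets.finite_UN[OF S(1)]) (use hs in blast)
  have "measure (haar d) (sumset d S (cell0 d N :: ((nat \<Rightarrow> real) \<times> 'z) set))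
     \<le> (\<Sum>p\<in>S. measure (haar d) (sumset d {p} (cell0 d N :: ((nat \<Rightarrow> real) \<times> 'z) set)))"
    unfolding sumset_UN[of d S] by (rule measure_UNION_le[OF S(1) hs])
  also have "\<dots> \<le> (\<Sum>p\<in>S. (1 / real N) ^ d / real CARD('z))"
    by (rule sum_mono) (use cell_sets_measure(2)[OF N] S(2) in blast)
  finally show "measure (haar d) (sumset d S (cell0 d N :: ((nat \<Rightarrow> real) \<times> 'z) set)) \<le> real (card S) * ((1 / real N) ^ d / real CARD('z))"
    by simp
qed



lemma cont_coord: "continuous (at x) (\<lambda>v::nat \<Rightarrow> real. v i)"
  by (metis continuous_on_eq_continuous_at continuous_on_product_coordinates open_UNIV UNIV_I)

lemma closed_coord_vimage: "closed C \<Longrightarrow> closed {v::nat \<Rightarrow> real. v i \<in> C}"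
proof -
  assume "closed C"
  then have "closed ((\<lambda>v::nat \<Rightarrow> real. v i) -` C)" by (rule continuous_closed_vimage) (rule cont_coord)
  then show ?thesis by (simp add: vimage_def)
qed

lemma closed_L: "closed {v::nat \<Rightarrow> real. \<forall>i\<ge>d. v i = 0}"
proof -
  have "closed {v::nat \<Rightarrow> real. d \<le> i \<longrightarrow> v i = 0}" for i
  proof (cases "d \<le> i")
    case True
    then have "{v::nat \<Rightarrow> real. d \<le> i \<longrightarrow> v i = 0} = {v. v i \<in> {0}}" by auto
    then show ?thesis using closed_coord_vimage[of "{0}" i] by simp
  next
    case False
    then show ?thesis by simp
  qed
  then show ?thesis by (intro closed_Collect_all) 
qed

lemma closed_frac_le:
  assumes w: "0 \<le> w"
  shows "closed {u::real. frac u \<le> w}"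
proof -
  have "open {u::real. w < frac u}"
    unfolding open_dist
  proof (intro ballI)
    fix u assume "u \<in> {u::real. w < frac u}"
    then have u: "w < frac u" by simp
    define e where "e = min (frac u - w) (1 - frac u)"
    have e: "e > 0" using u frac_lt_1[of u] by (simp add: e_def)
    have "\<forall>y. dist y u < e \<longrightarrow> y \<in> {u. w < frac u}"
    proof (intro allI impI)
      fix y assume "dist y u < e"
      then have y: "\<bar>y - u\<bar> < e" by (simp add: dist_real_def)
      have fu: "u = of_int \<lfloor>u\<rfloor> + frac u" by (simp add: frac_def)
      have "of_int \<lfloor>u\<rfloor> \<le> y" "y < of_int \<lfloor>u\<rfloor> + 1"
        using y fu w unfolding e_def by linarith+
      then have "\<lfloor>y\<rfloor> = \<lfloor>u\<rfloor>" by (simp add: floor_eq_iff)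
      then have "frac y = frac u + (y - u)" by (simp add: frac_def)
      then show "y \<in> {u. w < frac u}" using y unfolding e_def by auto
    qed
    then show "\<exists>e>0. \<forall>y. dist y u < e \<longrightarrow> y \<in> {u. w < frac u}" using e by blast
  qed
  moreover have "- {u::real. w < frac u} = {u. frac u \<le> w}" by auto
  ultimately show ?thesis by (metis closed_def double_complement)
qed

lemma closed_fracset:
  assumes N: "N > 0" and a: "0 \<le> a" "a < 1"
  shows "closed {t::real. frac t \<in> ccl N a}"
proof -
  have key: "frac t \<in> ccl N a \<longleftrightarrow> (\<exists>s. 0 \<le> s \<and> s \<le> 1 / real N \<and> frac t = frac (a + s))" for t
    by (rule ccl_iff[OF a N])
  have fr: "frac (a + frac (t - a)) = frac t" for t
    by (simp add: frac_add_frac)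
  show ?thesis
  proof (cases "N = 1")
    case True
    have "{t::real. frac t \<in> ccl N a} = UNIV"
    proof -
      have "frac t \<in> ccl N a" for t
        unfolding key using True fr[of t] frac_lt_1[of "t - a"]
        by (intro exI[of _ "frac (t - a)"]) (simp add: less_imp_le)
      then show ?thesis by auto
    qed
    then show ?thesis by simp
  next
    case False
    then have w1: "1 / real N < 1" using N by (simp add: field_simps)
    have "{t::real. frac t \<in> ccl N a} = (\<lambda>t. t - a) -` {u. frac u \<le> 1 / real N}"
    proof (rule set_eqI)
      fix t
      show "t \<in> {t::real. frac t \<in> ccl N a} \<longleftrightarrow> t \<in> (\<lambda>t. t - a) -` {u. frac u \<le> 1 / real N}"
      proof
        assume "t \<in> {t::real. frac t \<in> ccl N a}"
        then obtain s where s: "0 \<le> s" "s \<le> 1 / real N" "frac t = frac (a + s)" using key by blast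
        then have "t - (a + s) \<in> \<int>" by (intro frac_eq_imp_int)
        then obtain k where k: "t - (a + s) = of_int k" by (auto elim: Ints_cases)
        then have "t - a = s + of_int k" by simp
        then have "frac (t - a) = frac s" by (simp add: frac_add_of_int_right)
        also have "\<dots> = s" using s w1 by (simp add: frac_id)
        finally show "t \<in> (\<lambda>t. t - a) -` {u. frac u \<le> 1 / real N}" using s by simp
      next
        assume "t \<in> (\<lambda>t. t - a) -` {u. frac u \<le> 1 / real N}"
        then have "frac (t - a) \<le> 1 / real N" by simp
        then show "t \<in> {t::real. frac t \<in> ccl N a}"
          unfolding mem_Collect_eq key using fr[of t] by (intro exI[of _ "frac (t - a)"]) simp
      qed
    qed
    moreover have "closed ((\<lambda>t::real. t - a) -` {u. frac u \<le> 1 / real N})"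
      by (intro continuous_closed_vimage closed_frac_le) (auto intro!: continuous_intros)
    ultimately show ?thesis by simp
  qed
qed

lemma tproj_PiE_iff: "tproj d v \<in> PiE {..<d} F \<longleftrightarrow> (\<forall>i<d. frac (v i) \<in> F i)"
  unfolding tproj_def PiE_iff by auto

lemma tclosed_cells:
  assumes N: "N > 0" and S: "finite S" "S \<subseteq> TT d"
  shows "tclosed d (sumset d S (cell0 d N))"
  unfolding tclosed_def
proof (intro conjI allI)
  show "sumset d S (cell0 d N) \<subseteq> TT d" by (rule sumset_sub)
  fix z
  have pa: "0 \<le> fst p i" "fst p i < 1" if "p \<in> S" "i < d" for p i
  proof -
    have "fst p \<in> torus d" using S that by (auto simp: mem_Times_iff)
    then show "0 \<le> fst p i" "fst p i < 1" using torus_apply that by auto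
  qed
  have eq: "{v. (\<forall>i\<ge>d. v i = 0) \<and> (tproj d v, z) \<in> sumset d S (cell0 d N)}
     = {v. \<forall>i\<ge>d. v i = 0} \<inter> (\<Union>p\<in>{p\<in>S. snd p = z}. \<Inter>i\<in>{..<d}. {v. frac (v i) \<in> ccl N (fst p i)})"
  proof -
    have "(tproj d v, z) \<in> sumset d S (cell0 d N) \<longleftrightarrow> (\<exists>p\<in>S. snd p = z \<and> (\<forall>i<d. frac (v i) \<in> ccl N (fst p i)))" for v
    proof -
      have "(tproj d v, z) \<in> sumset d S (cell0 d N) \<longleftrightarrow> (\<exists>p\<in>S. (tproj d v, z) \<in> sumset d {p} (cell0 d N))"
        by (subst sumset_UN) blast
      also have "\<dots> \<longleftrightarrow> (\<exists>p\<in>S. (tproj d v, z) \<in> PiE {..<d} (\<lambda>i. ccl N (fst p i)) \<times> {snd p})"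
      proof -
        have "\<And>p. p \<in> S \<Longrightarrow> sumset d {p} (cell0 d N) = PiE {..<d} (\<lambda>i. ccl N (fst p i)) \<times> {snd p}"
          using cell_eq[OF N] S by blast
        then show ?thesis by (metis (no_types, lifting))
      qed
      also have "\<dots> \<longleftrightarrow> (\<exists>p\<in>S. snd p = z \<and> (\<forall>i<d. frac (v i) \<in> ccl N (fst p i)))"
        by (auto simp: tproj_PiE_iff mem_Times_iff)
      finally show ?thesis .
    qed
    then show ?thesis by auto
  qed
  have "closed (\<Union>p\<in>{p\<in>S. snd p = z}. \<Inter>i\<in>{..<d}. {v::nat \<Rightarrow> real. frac (v i) \<in> ccl N (fst p i)})"
  proof (rule closed_UN)
    show "finite {p \<in> S. snd p = z}" using S by simp
    show "\<forall>p\<in>{p \<in> S. snd p = z}. closed (\<Inter>i\<in>{..<d}. {v::nat \<Rightarrow> real. frac (v i) \<in> ccl N (fst p i)})"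
    proof
      fix p assume p: "p \<in> {p \<in> S. snd p = z}"
      show "closed (\<Inter>i\<in>{..<d}. {v::nat \<Rightarrow> real. frac (v i) \<in> ccl N (fst p i)})"
      proof (rule closed_INT, rule ballI)
        fix i assume "i \<in> {..<d}"
        then have "closed {t::real. frac t \<in> ccl N (fst p i)}" using p pa by (intro closed_fracset N) auto
        then show "closed {v::nat \<Rightarrow> real. frac (v i) \<in> ccl N (fst p i)}"
          using closed_coord_vimage[of "{t::real. frac t \<in> ccl N (fst p i)}" i] by simp
      qed
    qed
  qed
  then show "closed {v. (\<forall>i\<ge>d. v i = 0) \<and> (tproj d v, z) \<in> sumset d S (cell0 d N)}"
    unfolding eq by (intro closed_Int closed_L)
qed



definition Wset :: "nat \<Rightarrow> ((nat \<Rightarrow> real) \<times> 'z::ab_group_add) set \<Rightarrow> ((nat \<Rightarrow> real) \<times> 'z) set \<Rightarrow> real \<Rightarrow> ((nat \<Rightarrow> real) \<times> 'z) set" where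
  "Wset d A B r = {(tproj d (\<lambda>i. fst a i + fst b i + v i), snd a + snd b) | a b v. a \<in> A \<and> b \<in> B \<and> (\<forall>i<d. \<bar>v i\<bar> \<le> r)}"

lemma Wset_iff: "x \<in> Wset d A B r \<longleftrightarrow> (\<exists>a b v. a \<in> A \<and> b \<in> B \<and> (\<forall>i<d. \<bar>v i\<bar> \<le> r) \<and> x = (tproj d (\<lambda>i. fst a i + fst b i + v i), snd a + snd b))"
  unfolding Wset_def mem_Collect_eq by blast

lemma Wset_mono:
  assumes "r \<le> r'" shows "Wset d A B r \<subseteq> Wset d A B r'"
proof
  fix x assume "x \<in> Wset d A B r"
  then obtain a b v where h: "a \<in> A" "b \<in> B" "\<forall>i<d. \<bar>v i\<bar> \<le> r" "x = (tproj d (\<lambda>i. fst a i + fst b i + v i), snd a + snd b)"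
    unfolding Wset_iff by blast
  have "\<forall>i<d. \<bar>v i\<bar> \<le> r'" using h(3) assms by (meson order_trans)
  then show "x \<in> Wset d A B r'" unfolding Wset_iff using h(1,2,4) by blast
qed

lemma Wset_sub: "Wset d A B r \<subseteq> TT d"
  unfolding subset_iff Wset_iff by (auto simp: tproj_in_torus)

lemma compact_K: "compact (PiE UNIV (\<lambda>i::nat. if i < d then {0..1::real} else {0}))"
proof -
  have "compactin (product_topology (\<lambda>i. euclidean) UNIV) (PiE UNIV (\<lambda>i::nat. if i < d then {0..1::real} else {0}))"
    unfolding compactin_PiE by auto
  then show ?thesis by (simp add: euclidean_product_topology)
qed

lemma int_limit: "(\<And>n. f n \<in> \<int>) \<Longrightarrow> f \<longlonglongrightarrow> l \<Longrightarrow> (l::real) \<in> \<int>"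
  using closed_Ints closed_sequential_limits by blast

lemma Wset_limit:
  fixes A B :: "((nat \<Rightarrow> real) \<times> 'z::{ab_group_add,finite}) set"
  assumes A: "tclosed d A" and B: "tclosed d B" and rho: "\<rho> \<longlonglongrightarrow> 0"
    and x: "\<And>j. x \<in> Wset d A B (\<rho> j)"
  shows "x \<in> sumset d A B"
proof -
  have "\<forall>j. \<exists>t. fst t \<in> A \<and> fst (snd t) \<in> B \<and> (\<forall>i<d. \<bar>snd (snd t) i\<bar> \<le> \<rho> j) \<and>
      x = (tproj d (\<lambda>i. fst (fst t) i + fst (fst (snd t)) i + snd (snd t) i), snd (fst t) + snd (fst (snd t)))"
  proof
    fix j
    obtain a b v where "a \<in> A" "b \<in> B" "\<forall>i<d. \<bar>v i\<bar> \<le> \<rho> j" "x = (tproj d (\<lambda>i. fst a i + fst b i + v i), snd a + snd b)"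
      using x[of j] unfolding Wset_iff by blast
    then show "\<exists>t. fst t \<in> A \<and> fst (snd t) \<in> B \<and> (\<forall>i<d. \<bar>snd (snd t) i\<bar> \<le> \<rho> j) \<and>
      x = (tproj d (\<lambda>i. fst (fst t) i + fst (fst (snd t)) i + snd (snd t) i), snd (fst t) + snd (fst (snd t)))"
      by (intro exI[of _ "(a, b, v)"]) simp
  qed
  then obtain f where f: "\<forall>j. fst (f j) \<in> A \<and> fst (snd (f j)) \<in> B \<and> (\<forall>i<d. \<bar>snd (snd (f j)) i\<bar> \<le> \<rho> j) \<and>
      x = (tproj d (\<lambda>i. fst (fst (f j)) i + fst (fst (snd (f j))) i + snd (snd (f j)) i), snd (fst (f j)) + snd (fst (snd (f j))))"
    by (rule choice[THEN exE])
  define a where "a j = fst (f j)" for j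
  define b where "b j = fst (snd (f j))" for j
  define v where "v j = snd (snd (f j))" for j
  have H: "\<And>j. a j \<in> A" "\<And>j. b j \<in> B" "\<And>j i. i < d \<Longrightarrow> \<bar>v j i\<bar> \<le> \<rho> j"
    "\<And>j. x = (tproj d (\<lambda>i. fst (a j) i + fst (b j) i + v j i), snd (a j) + snd (b j))"
    using f unfolding a_def b_def v_def by blast+
  have AT: "A \<subseteq> TT d" and BT: "B \<subseteq> TT d" using A B by (auto simp: tclosed_def)
  have "\<exists>z. infinite {j. snd (a j) = z}"
  proof (rule ccontr)
    assume "\<not> (\<exists>z. infinite {j. snd (a j) = z})"
    then have fin: "\<And>z. finite {j. snd (a j) = z}" by blast
    have "finite (\<Union>z\<in>(UNIV :: 'z set). {j. snd (a j) = z})" by (rule finite_UN_I[OF finite fin])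
    moreover have "(\<Union>z\<in>(UNIV :: 'z set). {j. snd (a j) = z}) = UNIV" by blast
    ultimately show False by simp
  qed
  then obtain z where infJ: "infinite {j. snd (a j) = z}" by blast
  define J where "J = {j. snd (a j) = z}"
  define \<sigma> where "\<sigma> = enumerate J"
  have infJ': "infinite J" using infJ by (simp add: J_def)
  have \<sigma>: "strict_mono \<sigma>" "\<And>n. \<sigma> n \<in> J"
    unfolding \<sigma>_def by (rule strict_mono_enumerate[OF infJ'], rule enumerate_in_set[OF infJ'])
  define K where "K = PiE UNIV (\<lambda>i::nat. if i < d then {0..1::real} else {0})"
  define ea where "ea = (\<lambda>n. (\<lambda>i. if i < d then fst (a (\<sigma> n)) i else 0))"
  define eb where "eb = (\<lambda>n. (\<lambda>i. if i < d then fst (b (\<sigma> n)) i else 0))"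
  have aa: "0 \<le> fst (a j) i \<and> fst (a j) i < 1" if "i < d" for j i
  proof -
    have "a j \<in> TT d" using AT H(1)[of j] by blast
    then have "fst (a j) \<in> torus d" by (simp add: mem_Times_iff)
    then show ?thesis using torus_apply[OF _ that] by blast
  qed
  have bb: "0 \<le> fst (b j) i \<and> fst (b j) i < 1" if "i < d" for j i
  proof -
    have "b j \<in> TT d" using BT H(2)[of j] by blast
    then have "fst (b j) \<in> torus d" by (simp add: mem_Times_iff)
    then show ?thesis using torus_apply[OF _ that] by blast
  qed
  have eaK: "ea n \<in> K" for n unfolding K_def
  proof (rule PiE_I)
    fix i show "ea n i \<in> (if i < d then {0..1} else {0})"
      using aa[of i "\<sigma> n"] by (simp add: ea_def less_imp_le)
  qed simp
  have ebK: "eb n \<in> K" for n unfolding K_def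
  proof (rule PiE_I)
    fix i show "eb n i \<in> (if i < d then {0..1} else {0})"
      using bb[of i "\<sigma> n"] by (simp add: eb_def less_imp_le)
  qed simp
  have inK: "(ea n, eb n) \<in> K \<times> K" for n using eaK ebK by simp
  have "compact (K \<times> K)" unfolding K_def by (intro compact_Times compact_K)
  then have sc: "seq_compact (K \<times> K)" by (rule compact_imp_seq_compact)
  have allK: "\<forall>n. (\<lambda>n. (ea n, eb n)) n \<in> K \<times> K" using inK by simp
  obtain l r where l: "l \<in> K \<times> K" and r: "strict_mono r" and lim: "((\<lambda>n. (ea n, eb n)) \<circ> r) \<longlonglongrightarrow> l"
    by (rule seq_compactE[OF sc allK])
  obtain u w where lu: "l = (u, w)" by (cases l)
  have limu: "(\<lambda>n. ea (r n)) \<longlonglongrightarrow> u" using tendsto_fst[OF lim] lu by (simp add: o_def)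
  have limw: "(\<lambda>n. eb (r n)) \<longlonglongrightarrow> w" using tendsto_snd[OF lim] lu by (simp add: o_def)
  have tpa: "tproj d (ea n) = fst (a (\<sigma> n))" for n
  proof -
    have "fst (a (\<sigma> n)) \<in> torus d" using AT H(1)[of "\<sigma> n"] by (auto simp: mem_Times_iff)
    have "fst (a (\<sigma> n)) = tproj d (ea n)" unfolding eq_tproj_iff[OF \<open>fst (a (\<sigma> n)) \<in> torus d\<close>]
      using aa by (simp add: ea_def frac_id)
    then show ?thesis by simp
  qed
  have tpb: "tproj d (eb n) = fst (b (\<sigma> n))" for n
  proof -
    have "fst (b (\<sigma> n)) \<in> torus d" using BT H(2)[of "\<sigma> n"] by (auto simp: mem_Times_iff)
    have "fst (b (\<sigma> n)) = tproj d (eb n)" unfolding eq_tproj_iff[OF \<open>fst (b (\<sigma> n)) \<in> torus d\<close>]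
      using bb by (simp add: eb_def frac_id)
    then show ?thesis by simp
  qed
  have za: "snd (a (\<sigma> n)) = z" for n using \<sigma>(2)[of n] by (simp add: J_def)
  have zb: "snd (b (\<sigma> n)) = snd x - z" for n using H(4)[of "\<sigma> n"] za[of n] by (simp add: algebra_simps)
  have closedA: "closed {v. (\<forall>i\<ge>d. v i = 0) \<and> (tproj d v, z) \<in> A}" using A by (simp add: tclosed_def)
  have closedB: "closed {v. (\<forall>i\<ge>d. v i = 0) \<and> (tproj d v, snd x - z) \<in> B}" using B by (simp add: tclosed_def)
  have inSA: "\<forall>n. ea (r n) \<in> {v. (\<forall>i\<ge>d. v i = 0) \<and> (tproj d v, z) \<in> A}"
  proof
    fix n
    have "(tproj d (ea (r n)), z) = a (\<sigma> (r n))" using tpa za by (simp add: prod_eq_iff)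
    then show "ea (r n) \<in> {v. (\<forall>i\<ge>d. v i = 0) \<and> (tproj d v, z) \<in> A}" using H(1) by (simp add: ea_def)
  qed
  have "u \<in> {v. (\<forall>i\<ge>d. v i = 0) \<and> (tproj d v, z) \<in> A}"
    by (rule closed_sequential_limits[THEN iffD1, OF closedA, rule_format, of "\<lambda>n. ea (r n)" u]) (use inSA limu in blast)
  then have uA: "(tproj d u, z) \<in> A" by simp
  have inSB: "\<forall>n. eb (r n) \<in> {v. (\<forall>i\<ge>d. v i = 0) \<and> (tproj d v, snd x - z) \<in> B}"
  proof
    fix n
    have "(tproj d (eb (r n)), snd x - z) = b (\<sigma> (r n))" using tpb zb by (simp add: prod_eq_iff)
    then show "eb (r n) \<in> {v. (\<forall>i\<ge>d. v i = 0) \<and> (tproj d v, snd x - z) \<in> B}" using H(2) by (simp add: eb_def)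
  qed
  have "w \<in> {v. (\<forall>i\<ge>d. v i = 0) \<and> (tproj d v, snd x - z) \<in> B}"
    by (rule closed_sequential_limits[THEN iffD1, OF closedB, rule_format, of "\<lambda>n. eb (r n)" w]) (use inSB limw in blast)
  then have wB: "(tproj d w, snd x - z) \<in> B" by simp
  have sr: "strict_mono (\<sigma> \<circ> r)" using \<sigma>(1) r by (rule strict_mono_o)
  have fx: "fst x \<in> torus d" using H(4)[of 0] by (simp add: tproj_in_torus)
  have coord: "fst x i = frac (u i + w i)" if i: "i < d" for i
  proof -
    define y where "y = (\<lambda>n. fst (a (\<sigma> (r n))) i + fst (b (\<sigma> (r n))) i + v (\<sigma> (r n)) i)"
    have ci: "isCont (\<lambda>v::nat \<Rightarrow> real. v i) g" for g by (rule cont_coord)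
    have l1: "(\<lambda>n. fst (a (\<sigma> (r n))) i) \<longlonglongrightarrow> u i"
      using isCont_tendsto_compose[OF ci limu] i by (simp add: ea_def)
    have l2: "(\<lambda>n. fst (b (\<sigma> (r n))) i) \<longlonglongrightarrow> w i"
      using isCont_tendsto_compose[OF ci limw] i by (simp add: eb_def)
    have rho2: "(\<lambda>n. \<rho> (\<sigma> (r n))) \<longlonglongrightarrow> 0" using LIMSEQ_subseq_LIMSEQ[OF rho sr] by (simp add: o_def)
    have l3: "(\<lambda>n. v (\<sigma> (r n)) i) \<longlonglongrightarrow> 0"
    proof (rule Lim_null_comparison[OF _ rho2])
      show "\<forall>\<^sub>F n in sequentially. norm (v (\<sigma> (r n)) i) \<le> \<rho> (\<sigma> (r n))" using H(3)[OF i] by simp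
    qed
    have ly: "y \<longlonglongrightarrow> u i + w i" unfolding y_def using tendsto_add[OF tendsto_add[OF l1 l2] l3] by simp
    have fy: "frac (y n) = fst x i" for n
      using H(4)[of "\<sigma> (r n)"] i by (simp add: y_def tproj_apply prod_eq_iff)
    have "(\<lambda>n. y n - fst x i) \<longlonglongrightarrow> u i + w i - fst x i" by (intro tendsto_diff ly tendsto_const)
    moreover have "y n - fst x i \<in> \<int>" for n
    proof -
      have "y n - fst x i = of_int \<lfloor>y n\<rfloor>" using fy[of n] unfolding frac_def by linarith
      then show ?thesis by simp
    qed
    ultimately have "u i + w i - fst x i \<in> \<int>" using int_limit[of "\<lambda>n. y n - fst x i"] by blast
    then obtain k where k: "u i + w i = fst x i + of_int k" by (metis Ints_cases add_diff_cancel_left' diff_add_cancel add.commute)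
    have "frac (u i + w i) = frac (fst x i)" unfolding k by (rule frac_add_of_int_right)
    also have "\<dots> = fst x i" using torus_apply[OF fx i] by (simp add: frac_id)
    finally show ?thesis by simp
  qed
  have "x = gadd d (tproj d u, z) (tproj d w, snd x - z)"
  proof -
    have "fst x = tproj d (\<lambda>i. tproj d u i + tproj d w i)"
      unfolding eq_tproj_iff[OF fx] using coord by (simp add: tproj_apply frac_frac_add frac_add_frac)
    then show ?thesis by (simp add: gadd_def prod_eq_iff)
  qed
  then show ?thesis using sumsetI[OF uA wB, of d] by simp
qed



lemma fst_gadd: "i < d \<Longrightarrow> fst (gadd d p q) i = frac (fst p i + fst q i)"
  by (simp add: gadd_def tproj_apply)

lemma snd_gadd: "snd (gadd d p q) = snd p + snd q"
  by (simp add: gadd_def)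

lemma cube_iff: "x \<in> cube d n \<longleftrightarrow> (\<exists>v. x = (tproj d v, 0) \<and> (\<forall>i<d. \<bar>v i\<bar> \<le> 1 / real n))"
  unfolding cube_def mem_Collect_eq by blast

lemma TT_eqI:
  assumes "x \<in> TT d" "\<And>i. i < d \<Longrightarrow> fst x i = frac (f i)" "snd x = s"
  shows "x = (tproj d f, s)"
proof -
  have "fst x = tproj d f" using assms(1,2) by (subst eq_tproj_iff) (auto simp: mem_Times_iff)
  then show ?thesis using assms(3) by (simp add: prod_eq_iff)
qed

lemma TT_coord_eqI:
  assumes "x \<in> TT d" "y \<in> TT d" "\<And>i. i < d \<Longrightarrow> fst x i = fst y i" "snd x = snd y"
  shows "x = y"
proof -
  have fx: "fst x \<in> torus d" and fy: "fst y \<in> torus d" using assms(1,2) by (auto simp: mem_Times_iff)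
  have "fst x = fst y"
  proof
    fix i show "fst x i = fst y i"
      using assms(3)[of i] torus_out[OF fx, of i] torus_out[OF fy, of i] by (cases "i < d") simp_all
  qed
  then show ?thesis using assms(4) by (simp add: prod_eq_iff)
qed

lemma gfl_parts:
  assumes N: "N > 0" and x: "x \<in> TT d" and i: "i < d"
  shows "0 \<le> fst x i - fst (gfl d N x) i" "fst x i - fst (gfl d N x) i < 1 / real N"
proof -
  have a: "real_of_int \<lfloor>real N * fst x i\<rfloor> \<le> real N * fst x i" by (rule of_int_floor_le)
  have b: "real N * fst x i < real_of_int \<lfloor>real N * fst x i\<rfloor> + 1" by (rule real_of_int_floor_add_one_gt)
  have g: "fst (gfl d N x) i = of_int \<lfloor>real N * fst x i\<rfloor> / real N" using i by (simp add: gfl_def)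
  have e: "fst x i - of_int \<lfloor>real N * fst x i\<rfloor> / real N = (real N * fst x i - of_int \<lfloor>real N * fst x i\<rfloor>) / real N"
    using N by (simp add: field_simps)
  have "0 \<le> (real N * fst x i - of_int \<lfloor>real N * fst x i\<rfloor>) / real N" using a by simp
  moreover have "(real N * fst x i - of_int \<lfloor>real N * fst x i\<rfloor>) / real N < 1 / real N"
  proof -
    have "real N * fst x i - of_int \<lfloor>real N * fst x i\<rfloor> < 1" using b by linarith
    then show ?thesis using N by (intro divide_strict_right_mono) auto
  qed
  ultimately show "0 \<le> fst x i - fst (gfl d N x) i" "fst x i - fst (gfl d N x) i < 1 / real N"
    unfolding g e by simp_all
qed

lemma gfl_in_D:
  assumes N: "N > 0" and a: "a \<in> A" and AT: "A \<subseteq> TT d"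
  shows "sumset d {gfl d N a} (cell0 d N) \<subseteq> sumset d A (cube d N)"
proof
  fix y assume "y \<in> sumset d {gfl d N a} (cell0 d N)"
  then obtain c where c: "c \<in> cell0 d N" "y = gadd d (gfl d N a) c" by (blast elim: sumsetE)
  then obtain u where u: "c = (tproj d u, 0)" "\<forall>i<d. 0 \<le> u i \<and> u i \<le> 1 / real N" unfolding cell0_iff by blast
  have aT: "a \<in> TT d" using a AT by blast
  define h where "h = (\<lambda>i. fst a i - fst (gfl d N a) i)"
  define v where "v = (\<lambda>i. u i - h i)"
  have vc: "(tproj d v, 0) \<in> cube d N"
  proof -
    have "\<forall>i<d. \<bar>v i\<bar> \<le> 1 / real N"
    proof (intro allI impI)
      fix i assume i: "i < d"
      have "0 \<le> u i" "u i \<le> 1 / real N" using u(2) i by auto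
      moreover have "0 \<le> h i" "h i < 1 / real N" using gfl_parts[OF N aT i] by (simp_all add: h_def)
      ultimately have "v i \<le> 1 / real N" "- v i \<le> 1 / real N" unfolding v_def by linarith+
      then show "\<bar>v i\<bar> \<le> 1 / real N" by (simp add: abs_le_iff)
    qed
    then show ?thesis unfolding cube_iff by blast
  qed
  have "y = gadd d a (tproj d v, 0)"
  proof (rule TT_coord_eqI)
    show "y \<in> TT d" "gadd d a (tproj d v, 0) \<in> TT d" using c(2) by (simp_all add: gadd_in)
    fix i assume i: "i < d"
    show "fst y i = fst (gadd d a (tproj d v, 0)) i"
      using i c u by (simp add: fst_gadd tproj_apply frac_add_frac v_def h_def add_ac)
  next
    show "snd y = snd (gadd d a (tproj d v, 0))" using c u by (simp add: snd_gadd gfl_def)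
  qed
  then show "y \<in> sumset d A (cube d N)" using sumsetI[OF a vc] by simp
qed


lemma hbox_facts:
  assumes N: "N > 0" and p: "p \<in> grid d N" and y: "y \<in> hbox d N p"
  shows "y \<in> TT d" "snd y = snd p" "\<And>i. i < d \<Longrightarrow> fst p i \<le> fst y i \<and> fst y i < fst p i + 1 / real N"
proof -
  show "y \<in> TT d" using hbox_sub_cell[OF N p] y sumset_sub by blast
  show "snd y = snd p" using y by (simp add: hbox_def mem_Times_iff)
  fix i assume "i < d"
  then show "fst p i \<le> fst y i \<and> fst y i < fst p i + 1 / real N" using y by (auto simp: hbox_def mem_Times_iff PiE_iff)
qed

lemma U_sub_W:
  assumes N: "N > 0" and p: "p \<in> grid d N" and y: "y \<in> hbox d N p" and w: "w \<in> hbox d N p"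
    and wW: "w \<in> Wset d A B r"
  shows "y \<in> Wset d A B (r + 1 / real N)"
proof -
  obtain a b v where h: "a \<in> A" "b \<in> B" "\<forall>i<d. \<bar>v i\<bar> \<le> r" "w = (tproj d (\<lambda>i. fst a i + fst b i + v i), snd a + snd b)"
    using wW unfolding Wset_iff by blast
  define v' where "v' = (\<lambda>i. v i + (fst y i - fst w i))"
  have yT: "y \<in> TT d" using hbox_facts(1)[OF N p y] .
  have yi: "0 \<le> fst y i" "fst y i < 1" if "i < d" for i
    using yT torus_apply[of "fst y" d i] that by (auto simp: mem_Times_iff)
  have "y = (tproj d (\<lambda>i. fst a i + fst b i + v' i), snd a + snd b)"
  proof (rule TT_eqI[OF yT])
    fix i assume i: "i < d"
    have wi: "fst w i = frac (fst a i + fst b i + v i)" using h(4) i by (simp add: tproj_apply)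
    have "frac (fst a i + fst b i + v' i) = frac (frac (fst a i + fst b i + v i) + (fst y i - fst w i))"
      by (simp add: v'_def frac_frac_add add_ac)
    also have "\<dots> = fst y i" using wi yi[OF i] by (simp add: frac_id)
    finally show "fst y i = frac (fst a i + fst b i + v' i)" by simp
  next
    show "snd y = snd a + snd b" using hbox_facts(2)[OF N p y] hbox_facts(2)[OF N p w] h(4) by simp
  qed
  moreover have "\<forall>i<d. \<bar>v' i\<bar> \<le> r + 1 / real N"
  proof (intro allI impI)
    fix i assume i: "i < d"
    have "\<bar>fst y i - fst w i\<bar> < 1 / real N" using hbox_facts(3)[OF N p y i] hbox_facts(3)[OF N p w i] by linarith
    moreover have "\<bar>v i\<bar> \<le> r" using h(3) i by auto
    moreover have "\<bar>v i + (fst y i - fst w i)\<bar> \<le> \<bar>v i\<bar> + \<bar>fst y i - fst w i\<bar>" by (rule abs_triangle_ineq)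
    ultimately show "\<bar>v' i\<bar> \<le> r + 1 / real N" unfolding v'_def by linarith
  qed
  ultimately show ?thesis unfolding Wset_iff using h(1,2) by blast
qed

lemma gzero_cell0: "gzero d \<in> cell0 d N"
  unfolding cell0_iff gzero_def by (intro exI[of _ "\<lambda>_. 0"]) simp

lemma key_W:
  assumes n: "n > 0" and p: "p \<in> grid d n" and pD: "sumset d {p} (cell0 d n) \<subseteq> sumset d A (cube d n)"
    and b: "b \<in> B" and BT: "B \<subseteq> TT d" and e: "e \<in> Eset d n"
    and y: "y \<in> hbox d n (gadd d p (gadd d (gfl d n b) e))"
  shows "y \<in> Wset d A B (3 / real n)"
proof -
  have bT: "b \<in> TT d" using b BT by blast
  have gb: "gfl d n b \<in> grid d n" by (rule gfl_grid[OF n bT])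
  have q: "gadd d p (gadd d (gfl d n b) e) \<in> grid d n"
    by (intro gadd_grid n p gb) (use Eset_grid[OF n] e in blast)
  have "y \<in> sumset d {gadd d p (gadd d (gfl d n b) e)} (cell0 d n)" using hbox_sub_cell[OF n q] y by blast
  then obtain hc where hc: "hc \<in> cell0 d n" "y = gadd d (gadd d p (gadd d (gfl d n b) e)) hc" by (blast elim: sumsetE)
  then obtain h where h: "hc = (tproj d h, 0)" "\<forall>i<d. 0 \<le> h i \<and> h i \<le> 1 / real n" unfolding cell0_iff by blast
  have pT: "p \<in> TT d" using p grid_sub by blast
  have "gadd d p (gzero d) \<in> sumset d {p} (cell0 d n)" by (rule sumsetI) (simp_all add: gzero_cell0)
  then have "p \<in> sumset d {p} (cell0 d n)" using gadd_gzero[OF pT] by simp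
  then have "p \<in> sumset d A (cube d n)" using pD by blast
  then obtain a cc where a: "a \<in> A" "cc \<in> cube d n" "p = gadd d a cc" by (blast elim: sumsetE)
  then obtain c where c: "cc = (tproj d c, 0)" "\<forall>i<d. \<bar>c i\<bar> \<le> 1 / real n" unfolding cube_iff by blast
  obtain e' where e': "e = (tproj d e', 0)" "\<forall>i<d. e' i = 0 \<or> e' i = 1 / real n" using e unfolding Eset_iff by blast
  define v where "v = (\<lambda>i. c i - (fst b i - fst (gfl d n b) i) + e' i + h i)"
  have yT: "y \<in> TT d" using hc(2) by (simp add: gadd_in)
  have "y = (tproj d (\<lambda>i. fst a i + fst b i + v i), snd a + snd b)"
  proof (rule TT_eqI[OF yT])
    fix i assume i: "i < d"
    have "fst y i = frac (fst a i + c i + (fst (gfl d n b) i + e' i) + h i)"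
      using i by (simp add: hc(2) h(1) a(3) c(1) e'(1) fst_gadd tproj_apply frac_add_frac frac_frac_add)
    also have "\<dots> = frac (fst a i + fst b i + v i)" by (simp add: v_def algebra_simps)
    finally show "fst y i = frac (fst a i + fst b i + v i)" .
  next
    show "snd y = snd a + snd b" by (simp add: hc(2) h(1) a(3) c(1) e'(1) snd_gadd gfl_def)
  qed
  moreover have "\<forall>i<d. \<bar>v i\<bar> \<le> 3 / real n"
  proof (intro allI impI)
    fix i assume i: "i < d"
    have "\<bar>c i\<bar> \<le> 1 / real n" "0 \<le> h i" "h i \<le> 1 / real n" "0 \<le> e' i" "e' i \<le> 1 / real n"
      using c(2) h(2) e'(2) i n by auto
    moreover have "0 \<le> fst b i - fst (gfl d n b) i" "fst b i - fst (gfl d n b) i < 1 / real n"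
      using gfl_parts[OF n bT i] by auto
    moreover have "3 / real n = 1 / real n + 1 / real n + 1 / real n" by simp
    ultimately show "\<bar>v i\<bar> \<le> 3 / real n" unfolding v_def by (simp add: abs_le_iff)
  qed
  ultimately show ?thesis unfolding Wset_iff using a(1) b by blast
qed



lemma limit_part:
  fixes A B :: "((nat \<Rightarrow> real) \<times> 'z::{ab_group_add,finite}) set"
  assumes A: "tclosed d A" and B: "tclosed d B"
    and s: "0 < measure (haar d) (sumset d A B)" and eps: "\<epsilon> > 0"
  shows "\<exists>r>0. \<exists>V. V \<in> sets (haar d) \<and> Wset d A B r \<subseteq> V \<and> measure (haar d) V \<le> (1 + \<epsilon>) * measure (haar d) (sumset d A B)"
proof -
  interpret M: finite_measure "haar d :: ((nat \<Rightarrow> real) \<times> 'z) measure" by (rule finite_haar)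
  define G where "G j = {p \<in> grid d (Suc j). hbox d (Suc j) p \<inter> Wset d A B (1 / real (Suc j)) \<noteq> {}}" for j
  define U where "U j = (\<Union>p\<in>G j. hbox d (Suc j) p :: ((nat \<Rightarrow> real) \<times> 'z) set)" for j
  define V where "V j = (\<Inter>i\<in>{..j}. U i)" for j
  have Gsub: "G j \<subseteq> grid d (Suc j)" for j by (auto simp: G_def)
  have Gfin: "finite (G j)" for j using finite_subset[OF Gsub finite_grid] by blast
  have Usets: "U j \<in> sets (haar d)" for j
    unfolding U_def by (rule hbox_union_measure(1)[OF _ Gfin Gsub]) simp
  have Vsets: "V j \<in> sets (haar d)" for j
    unfolding V_def by (rule sets.finite_INT) (auto intro: Usets)
  have Vdec: "decseq V" by (rule decseq_SucI) (auto simp: V_def)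
  have WU: "Wset d A B (1 / real (Suc j)) \<subseteq> U j" for j
  proof
    fix x assume x: "x \<in> Wset d A B (1 / real (Suc j))"
    have xT: "x \<in> TT d" using x Wset_sub by blast
    have "x \<in> hbox d (Suc j) (gfl d (Suc j) x)" by (rule mem_hbox_gfl[OF _ xT]) simp
    moreover have "gfl d (Suc j) x \<in> grid d (Suc j)" by (rule gfl_grid[OF _ xT]) simp
    ultimately have "gfl d (Suc j) x \<in> G j" using x by (auto simp: G_def)
    then show "x \<in> U j" unfolding U_def using \<open>x \<in> hbox d (Suc j) (gfl d (Suc j) x)\<close> by blast
  qed
  have UW: "U j \<subseteq> Wset d A B (2 / real (Suc j))" for j
  proof
    fix y assume "y \<in> U j"
    then obtain p where p: "p \<in> G j" "y \<in> hbox d (Suc j) p" unfolding U_def by blast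
    then obtain w where w: "w \<in> hbox d (Suc j) p" "w \<in> Wset d A B (1 / real (Suc j))" unfolding G_def by blast
    have "y \<in> Wset d A B (1 / real (Suc j) + 1 / real (Suc j))"
      by (rule U_sub_W[OF _ _ p(2) w]) (use p(1) Gsub in auto)
    then show "y \<in> Wset d A B (2 / real (Suc j))" by simp
  qed
  have ABsets: "sumset d A B \<in> sets (haar d)" using s measure_notin_sets by fastforce
  have capsub: "(\<Inter>j. V j) \<subseteq> sumset d A B"
  proof
    fix x assume "x \<in> (\<Inter>j. V j)"
    then have "x \<in> Wset d A B (2 / real (Suc j))" for j using UW unfolding V_def by blast
    moreover have "(\<lambda>j. 2 / real (Suc j)) \<longlonglongrightarrow> 0"
      using LIMSEQ_Suc[OF lim_const_over_n[of "2::real"]] by simp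
    ultimately show "x \<in> sumset d A B" using Wset_limit[OF A B] by blast
  qed
  have lim: "(\<lambda>j. measure (haar d) (V j)) \<longlonglongrightarrow> measure (haar d) (\<Inter>j. V j)"
    by (rule M.finite_Lim_measure_decseq) (use Vsets Vdec in auto)
  have caple: "measure (haar d) (\<Inter>j. V j) \<le> measure (haar d) (sumset d A B)"
    by (rule M.finite_measure_mono[OF capsub ABsets])
  have "measure (haar d) (\<Inter>j. V j) < (1 + \<epsilon>) * measure (haar d) (sumset d A B)"
    using caple s eps by (simp add: algebra_simps) (smt (verit) mult_pos_pos)
  from order_tendstoD(2)[OF lim this] obtain J where
    J: "\<And>j. j \<ge> J \<Longrightarrow> measure (haar d) (V j) < (1 + \<epsilon>) * measure (haar d) (sumset d A B)"
    unfolding eventually_sequentially by blast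
  have "Wset d A B (1 / real (Suc J)) \<subseteq> V J"
  proof -
    have "Wset d A B (1 / real (Suc J)) \<subseteq> U i" if "i \<le> J" for i
    proof -
      have "1 / real (Suc J) \<le> 1 / real (Suc i)" using that by (simp add: frac_le)
      then have "Wset d A B (1 / real (Suc J)) \<subseteq> Wset d A B (1 / real (Suc i))" by (rule Wset_mono)
      then show ?thesis using WU by blast
    qed
    then show ?thesis unfolding V_def by blast
  qed
  then show ?thesis using Vsets[of J] J[of J] by (intro exI[of _ "1 / real (Suc J)"]) auto
qed



theorem theorem2p5:
  fixes d :: nat and \<alpha> :: real
    and A B :: "((nat \<Rightarrow> real) \<times> 'z::{ab_group_add,finite}) set"
  assumes "tclosed d A" and "tclosed d B"
    and "0 < measure (haar d) (sumset d A B)"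
    and "measure (haar d) (sumset d A B) \<le> \<alpha> * measure (haar d) A"
  shows "\<forall>\<epsilon>>0. \<exists>N. \<forall>n\<ge>N. n > 0 \<longrightarrow>
           (\<exists>A'. A' \<subseteq> sumset d A (cube d n) \<and> A' \<noteq> {} \<and> tclosed d A' \<and>
              (\<forall>m::nat. measure (haar d) (sumset d A' (msumset d m B))
                 \<le> (1 + \<epsilon>) ^ m * \<alpha> ^ m * measure (haar d) A'))"
proof (intro allI impI)
  fix \<epsilon> :: real assume eps: "\<epsilon> > 0"
  note Acl = assms(1) and Bcl = assms(2) and sAB = assms(3) and hyp = assms(4)
  interpret M: finite_measure "haar d :: ((nat \<Rightarrow> real) \<times> 'z) measure" by (rule finite_haar)
  let ?\<mu> = "measure (haar d) :: ((nat \<Rightarrow> real) \<times> 'z) set \<Rightarrow> real"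
  have AT: "A \<subseteq> TT d" and BT: "B \<subseteq> TT d" using Acl Bcl by (auto simp: tclosed_def)
  have muA: "?\<mu> A > 0"
  proof -
    have "0 < \<alpha> * ?\<mu> A" using sAB hyp by linarith
    moreover have "?\<mu> A \<ge> 0" by simp
    ultimately show ?thesis by (metis less_eq_real_def mult_zero_right)
  qed
  have alpha: "\<alpha> > 0"
  proof -
    have "0 < \<alpha> * ?\<mu> A" using sAB hyp by linarith
    then show ?thesis using muA by (simp add: zero_less_mult_iff)
  qed
  have Ane: "A \<noteq> {}" using muA by auto
  obtain r V where r: "r > 0" and V: "V \<in> sets (haar d)" "Wset d A B r \<subseteq> V"
    "?\<mu> V \<le> (1 + \<epsilon>) * ?\<mu> (sumset d A B)"
    using limit_part[OF Acl Bcl sAB eps] by blast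
  define N0 where "N0 = nat \<lceil>3 / r\<rceil> + 1"
  show "\<exists>N. \<forall>n\<ge>N. n > 0 \<longrightarrow>
           (\<exists>A'. A' \<subseteq> sumset d A (cube d n) \<and> A' \<noteq> {} \<and> tclosed d A' \<and>
              (\<forall>m::nat. ?\<mu> (sumset d A' (msumset d m B)) \<le> (1 + \<epsilon>) ^ m * \<alpha> ^ m * ?\<mu> A'))"
  proof (intro exI[of _ N0] allI impI)
    fix n :: nat assume nN: "N0 \<le> n" and n: "n > 0"
    have rn: "3 / real n \<le> r"
    proof -
      have "3 / r \<le> real N0" unfolding N0_def by linarith
      then have "3 / r \<le> real n" using nN by linarith
      then show ?thesis using r n by (simp add: field_simps)
    qed
    define vol where "vol = (1 / real n) ^ d / real CARD('z)"
    have vol: "vol > 0" using n by (simp add: vol_def)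
    define D where "D = {p \<in> grid d n. sumset d {p} (cell0 d n) \<subseteq> sumset d A (cube d n)}"
    define Bd where "Bd = sumset d (gfl d n ` B) (Eset d n :: ((nat \<Rightarrow> real) \<times> 'z) set)"
    have Dgrid: "D \<subseteq> grid d n" by (auto simp: D_def)
    have DT: "D \<subseteq> TT d" using Dgrid grid_sub by blast
    have finD: "finite D" using finite_subset[OF Dgrid finite_grid[OF n]] .
    have Bdgrid: "Bd \<subseteq> grid d n"
    proof
      fix q assume "q \<in> Bd"
      then obtain g e where ge: "g \<in> gfl d n ` B" "e \<in> Eset d n" "q = gadd d g e" unfolding Bd_def by (blast elim: sumsetE)
      have "g \<in> grid d n" using ge(1) gfl_grid[OF n] BT by blast
      moreover have "e \<in> grid d n" using ge(2) Eset_grid[OF n] by blast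
      ultimately show "q \<in> grid d n" using ge(3) gadd_grid[OF n] by simp
    qed
    have finBd: "finite Bd" using finite_subset[OF Bdgrid finite_grid[OF n]] .
    have AD: "A \<subseteq> sumset d D (cell0 d n)"
    proof
      fix a assume a: "a \<in> A"
      have aT: "a \<in> TT d" using a AT by blast
      have g: "gfl d n a \<in> D" unfolding D_def using gfl_grid[OF n aT] gfl_in_D[OF n a AT] by simp
      have "a \<in> hbox d n (gfl d n a)" by (rule mem_hbox_gfl[OF n aT])
      also have "\<dots> \<subseteq> sumset d {gfl d n a} (cell0 d n)" by (rule hbox_sub_cell[OF n gfl_grid[OF n aT]])
      also have "\<dots> \<subseteq> sumset d D (cell0 d n)" using g by (intro sumset_mono) auto
      finally show "a \<in> sumset d D (cell0 d n)" .
    qed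
    have Dne: "D \<noteq> {}" using AD Ane by auto
    have muAD: "?\<mu> A \<le> real (card D) * vol"
    proof -
      have "?\<mu> A \<le> ?\<mu> (sumset d D (cell0 d n))"
        by (rule M.finite_measure_mono[OF AD cells_sets_measure(1)[OF n finD DT]])
      also have "\<dots> \<le> real (card D) * vol" unfolding vol_def by (rule cells_sets_measure(2)[OF n finD DT])
      finally show ?thesis .
    qed
    obtain X where X: "X \<subseteq> D" "X \<noteq> {}"
      and KD: "real (card (sumset d X Bd)) / card X \<le> real (card (sumset d D Bd)) / card D"
      and plun: "\<And>m. real (card (sumset d X (msumset d m Bd))) \<le> (real (card (sumset d X Bd)) / card X) ^ m * card X"
      using plunnecke_min[OF finD Dne DT finBd] by blast
    define K where "K = real (card (sumset d X Bd)) / card X"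
    have K0: "K \<ge> 0" by (simp add: K_def)
    have finX: "finite X" using finite_subset[OF X(1) finD] .
    have XT: "X \<subseteq> TT d" using X(1) DT by blast
    define A' where "A' = sumset d X (cell0 d n)"
    have A'sub: "A' \<subseteq> sumset d A (cube d n)"
    proof
      fix y assume "y \<in> A'"
      then obtain p where p: "p \<in> X" "y \<in> sumset d {p} (cell0 d n)" unfolding A'_def sumset_UN[of d X] by blast
      then show "y \<in> sumset d A (cube d n)" using X(1) by (auto simp: D_def)
    qed
    have A'ne: "A' \<noteq> {}"
    proof -
      obtain p where "p \<in> X" using X(2) by blast
      then have "gadd d p (gzero d) \<in> A'" unfolding A'_def by (intro sumsetI gzero_cell0)
      then show ?thesis by blast
    qed
    have A'cl: "tclosed d A'" unfolding A'_def by (rule tclosed_cells[OF n finX XT])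
    have A'sets: "A' \<in> sets (haar d)" unfolding A'_def by (rule cells_sets_measure(1)[OF n finX XT])
    have muA': "real (card X) * vol \<le> ?\<mu> A'"
    proof -
      have "(\<Union>p\<in>X. hbox d n p) \<subseteq> A'"
      proof
        fix y assume "y \<in> (\<Union>p\<in>X. hbox d n p)"
        then obtain p where p: "p \<in> X" "y \<in> hbox d n p" by blast
        then have "y \<in> sumset d {p} (cell0 d n)" using hbox_sub_cell[OF n] X(1) Dgrid by blast
        then show "y \<in> A'" unfolding A'_def using p(1) by (meson empty_subsetI insert_subset order_refl subsetD sumset_mono)
      qed
      then have "?\<mu> (\<Union>p\<in>X. hbox d n p) \<le> ?\<mu> A'" by (rule M.finite_measure_mono[OF _ A'sets])
      moreover have "?\<mu> (\<Union>p\<in>X. hbox d n p) = real (card X) * vol"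
        unfolding vol_def by (rule hbox_union_measure(2)[OF n finX]) (use X(1) Dgrid in blast)
      ultimately show ?thesis by simp
    qed
    have muA'm: "?\<mu> (sumset d A' (msumset d m B)) \<le> real (card (sumset d X (msumset d m Bd))) * vol" for m
    proof -
      let ?S = "sumset d X (msumset d m Bd)"
      have finS: "finite ?S" by (intro finite_sumset finX finite_msumset finBd)
      have ST: "?S \<subseteq> TT d" by (rule sumset_sub)
      have "sumset d A' (msumset d m B) \<subseteq> sumset d ?S (cell0 d n)"
        unfolding A'_def Bd_def by (rule msum_cells[OF n BT XT])
      then have "?\<mu> (sumset d A' (msumset d m B)) \<le> ?\<mu> (sumset d ?S (cell0 d n))"
        by (rule M.finite_measure_mono[OF _ cells_sets_measure(1)[OF n finS ST]])
      also have "\<dots> \<le> real (card ?S) * vol" unfolding vol_def by (rule cells_sets_measure(2)[OF n finS ST])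
      finally show ?thesis .
    qed
    have DBgrid: "sumset d D Bd \<subseteq> grid d n"
    proof
      fix q assume "q \<in> sumset d D Bd"
      then obtain p q' where "p \<in> D" "q' \<in> Bd" "q = gadd d p q'" by (blast elim: sumsetE)
      then show "q \<in> grid d n" using gadd_grid[OF n] Dgrid Bdgrid by blast
    qed
    have finDB: "finite (sumset d D Bd)" by (intro finite_sumset finD finBd)
    have cardDB: "real (card (sumset d D Bd)) * vol \<le> (1 + \<epsilon>) * \<alpha> * (real (card D) * vol)"
    proof -
      have sub: "(\<Union>q\<in>sumset d D Bd. hbox d n q) \<subseteq> V"
      proof
        fix y assume "y \<in> (\<Union>q\<in>sumset d D Bd. hbox d n q)"
        then obtain q where q: "q \<in> sumset d D Bd" "y \<in> hbox d n q" by blast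
        then obtain p q' where pq: "p \<in> D" "q' \<in> Bd" "q = gadd d p q'" by (blast elim: sumsetE)
        then obtain g e where ge: "g \<in> gfl d n ` B" "e \<in> Eset d n" "q' = gadd d g e" unfolding Bd_def by (blast elim: sumsetE)
        then obtain b where b: "b \<in> B" "g = gfl d n b" by blast
        have "y \<in> Wset d A B (3 / real n)"
          by (rule key_W[OF n _ _ b(1) BT ge(2)]) (use pq ge b q D_def in auto)
        then have "y \<in> Wset d A B r" using Wset_mono[OF rn] by blast
        then show "y \<in> V" using V(2) by blast
      qed
      have "real (card (sumset d D Bd)) * vol = ?\<mu> (\<Union>q\<in>sumset d D Bd. hbox d n q)"
        unfolding vol_def by (rule hbox_union_measure(2)[OF n finDB DBgrid, symmetric])
      also have "\<dots> \<le> ?\<mu> V" by (rule M.finite_measure_mono[OF sub V(1)])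
      also have "\<dots> \<le> (1 + \<epsilon>) * ?\<mu> (sumset d A B)" by (rule V(3))
      also have "\<dots> \<le> (1 + \<epsilon>) * (\<alpha> * ?\<mu> A)" using hyp eps by (intro mult_left_mono) auto
      also have "\<dots> \<le> (1 + \<epsilon>) * (\<alpha> * (real (card D) * vol))"
        using muAD eps alpha by (intro mult_left_mono) auto
      finally show ?thesis by (simp add: algebra_simps)
    qed
    have cD: "real (card D) > 0" using finD Dne by (simp add: card_gt_0_iff)
    have KK: "K \<le> (1 + \<epsilon>) * \<alpha>"
    proof -
      have "(1 + \<epsilon>) * \<alpha> * (real (card D) * vol) = ((1 + \<epsilon>) * \<alpha> * real (card D)) * vol"
        by (simp only: mult.assoc)
      then have "real (card (sumset d D Bd)) * vol \<le> ((1 + \<epsilon>) * \<alpha> * real (card D)) * vol"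
        using cardDB by simp
      then have "real (card (sumset d D Bd)) \<le> (1 + \<epsilon>) * \<alpha> * real (card D)"
        by (rule mult_right_le_imp_le[OF _ vol])
      then have "real (card (sumset d D Bd)) / card D \<le> (1 + \<epsilon>) * \<alpha>"
        using cD by (simp add: field_simps)
      then show ?thesis using KD by (simp add: K_def)
    qed
    have final: "?\<mu> (sumset d A' (msumset d m B)) \<le> (1 + \<epsilon>) ^ m * \<alpha> ^ m * ?\<mu> A'" for m
    proof -
      have "?\<mu> (sumset d A' (msumset d m B)) \<le> real (card (sumset d X (msumset d m Bd))) * vol" by (rule muA'm)
      also have "\<dots> \<le> (K ^ m * card X) * vol" using plun[of m] vol by (simp add: K_def)
      also have "\<dots> = K ^ m * (card X * vol)" by simp
      also have "\<dots> \<le> K ^ m * ?\<mu> A'" using muA' K0 by (intro mult_left_mono) auto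
      also have "\<dots> \<le> ((1 + \<epsilon>) * \<alpha>) ^ m * ?\<mu> A'"
        using KK K0 by (intro mult_right_mono power_mono) auto
      also have "\<dots> = (1 + \<epsilon>) ^ m * \<alpha> ^ m * ?\<mu> A'" by (simp add: power_mult_distrib)
      finally show ?thesis .
    qed
    show "\<exists>A'. A' \<subseteq> sumset d A (cube d n) \<and> A' \<noteq> {} \<and> tclosed d A' \<and>
              (\<forall>m::nat. ?\<mu> (sumset d A' (msumset d m B)) \<le> (1 + \<epsilon>) ^ m * \<alpha> ^ m * ?\<mu> A')"
      using A'sub A'ne A'cl final by blast
  qed
qed


end
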